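(* Let $p\colon X\to B$ be a Boolean set. Then the map $\alpha\colon X\to X^{\ast\ast}$, $a\mapsto L(a)=\{G\in X^{\ast}: a\in G\}$, together with $\overline{\alpha}\colon B\to B^{\ast\ast}$, $b\mapsto M(b)=\{F\in B^{\ast}: b\in F\}$, is an isomorphism of Boolean sets from $p\colon X\to B$ onto the Boolean set $X^{\ast\ast}\to B^{\ast\ast}$ of compact-open local sections of the dual étalé space $\widetilde p\colon X^{\ast}\to B^{\ast}$.
   Context: Convention: a "Boolean algebra" means a generalized Boolean algebra (relatively complemented distributive lattice with $0$). Boolean set: a presheaf of sets $p\colon X\to B$ over a Boolean algebra $B$ (pairwise disjoint $X_e$, restriction maps $x\mapsto x|^e_f$ for $e\ge f$, $|^e_e=\mathrm{id}$, $(x|^e_f)|^f_g=x|^e_g$) with all $X_e\ne\emptyset$, such that under the order $x\le y$ iff $p(x)\le p(y)$ and $x=y|^{p(y)}_{p(x)}$ there is a least element $0$, compatible pairs ($x\wedge y$ exists and $p(x\wedge y)=p(x)\wedge p(y)$) have joins, and $p(x)=0\Rightarrow x=0$. Morphism of Boolean sets: $\varphi$ with Boolean algebra morphism $\overline{\varphi}$, $q\varphi=\overline{\varphi}p$, $\varphi(x|^a_b)=\varphi(x)|^{\overline{\varphi}(a)}_{\overline{\varphi}(b)}$; isomorphism: invertible morphism. Dual étalé space: $X^{\ast}$ = ultrafilters of $(X,\le)$ (maximal proper non-empty down-directed upward-closed subsets) with basis $L(a)$; $B^{\ast}$ = ultrafilters of $B$ with basis $M(b)$; $\widetilde p(G)=p(G)$.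 For an étalé space $(E,r,Z)$ (surjective local homeomorphism, $Z$ Boolean space), its dual Boolean set is $E^{\ast}\to Z^{\ast}$ where $Z^{\ast}$ is the Boolean algebra of compact-open subsets of $Z$, $E^{\ast}$ the compact-open local sections (open sets on which $r$ is injective), $C\mapsto r(C)$, with restriction $C|^A_{A'}=C\cap r^{-1}(A')$. Here $X^{\ast\ast}$, $B^{\ast\ast}$ denote this construction applied to $\widetilde p\colon X^{\ast}\to B^{\ast}$. *)

theory Defs
  imports "HOL-Analysis.Analysis"
begin

definition is_least :: "'a set \<Rightarrow> ('a \<Rightarrow> 'a \<Rightarrow> bool) \<Rightarrow> 'a \<Rightarrow> bool" where
  "is_least A le z \<longleftrightarrow> z \<in> A \<and> (\<forall>x\<in>A. le z x)"

definition is_inf :: "'a set \<Rightarrow> ('a \<Rightarrow> 'a \<Rightarrow> bool) \<Rightarrow> 'a \<Rightarrow> 'a \<Rightarrow> 'a \<Rightarrow> bool" where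
  "is_inf A le a b m \<longleftrightarrow> m \<in> A \<and> le m a \<and> le m b \<and> (\<forall>c\<in>A. le c a \<and> le c b \<longrightarrow> le c m)"

definition is_sup :: "'a set \<Rightarrow> ('a \<Rightarrow> 'a \<Rightarrow> bool) \<Rightarrow> 'a \<Rightarrow> 'a \<Rightarrow> 'a \<Rightarrow> bool" where
  "is_sup A le a b s \<longleftrightarrow> s \<in> A \<and> le a s \<and> le b s \<and> (\<forall>c\<in>A. le a c \<and> le b c \<longrightarrow> le s c)"

definition partial_order_carrier :: "'a set \<Rightarrow> ('a \<Rightarrow> 'a \<Rightarrow> bool) \<Rightarrow> bool" where
  "partial_order_carrier A le \<longleftrightarrow>
     (\<forall>x\<in>A. le x x) \<and>
     (\<forall>x\<in>A. \<forall>y\<in>A. le x y \<and> le y x \<longrightarrow> x = y) \<and>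
     (\<forall>x\<in>A. \<forall>y\<in>A. \<forall>z\<in>A. le x y \<and> le y z \<longrightarrow> le x z)"

definition gen_boolean_algebra :: "'b set \<Rightarrow> ('b \<Rightarrow> 'b \<Rightarrow> bool) \<Rightarrow> bool" where
  "gen_boolean_algebra B le \<longleftrightarrow>
     partial_order_carrier B le \<and>
     (\<exists>z. is_least B le z) \<and>
     (\<forall>a\<in>B. \<forall>b\<in>B. (\<exists>m. is_inf B le a b m) \<and> (\<exists>s. is_sup B le a b s)) \<and>
     (\<forall>a\<in>B. \<forall>b\<in>B. \<forall>c\<in>B. \<forall>s m mb mc.
        is_sup B le b c s \<and> is_inf B le a s m \<and> is_inf B le a b mb \<and> is_inf B le a c mc
        \<longrightarrow> is_sup B le mb mc m) \<and>
     (\<forall>a\<in>B. \<forall>b\<in>B. \<forall>z. le a b \<and> is_least B le z \<longrightarrow>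
        (\<exists>c\<in>B. is_inf B le a c z \<and> is_sup B le a c b))"

definition ba_hom :: "'b set \<Rightarrow> ('b \<Rightarrow> 'b \<Rightarrow> bool) \<Rightarrow> 'c set \<Rightarrow> ('c \<Rightarrow> 'c \<Rightarrow> bool) \<Rightarrow> ('b \<Rightarrow> 'c) \<Rightarrow> bool" where
  "ba_hom B le C le' f \<longleftrightarrow>
     f ` B \<subseteq> C \<and>
     (\<forall>z. is_least B le z \<longrightarrow> is_least C le' (f z)) \<and>
     (\<forall>a\<in>B. \<forall>b\<in>B. \<forall>m. is_inf B le a b m \<longrightarrow> is_inf C le' (f a) (f b) (f m)) \<and>
     (\<forall>a\<in>B. \<forall>b\<in>B. \<forall>s. is_sup B le a b s \<longrightarrow> is_sup C le' (f a) (f b) (f s))"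

text \<open>A presheaf over the Boolean algebra (B, le) is given by the total set X, the projection
  p (so X_e = {x \<in> X. p x = e}, automatically pairwise disjoint) and restriction maps
  res e f x = x|^e_f, meaningful for f \<le> e and p x = e.\<close>

definition bs_le :: "'b set \<Rightarrow> ('b \<Rightarrow> 'b \<Rightarrow> bool) \<Rightarrow> ('x \<Rightarrow> 'b) \<Rightarrow> ('b \<Rightarrow> 'b \<Rightarrow> 'x \<Rightarrow> 'x) \<Rightarrow> 'x \<Rightarrow> 'x \<Rightarrow> bool" where
  "bs_le B le p res x y \<longleftrightarrow> le (p x) (p y) \<and> x = res (p y) (p x) y"

definition boolean_set :: "'x set \<Rightarrow> 'b set \<Rightarrow> ('b \<Rightarrow> 'b \<Rightarrow> bool) \<Rightarrow> ('x \<Rightarrow> 'b) \<Rightarrow> ('b \<Rightarrow> 'b \<Rightarrow> 'x \<Rightarrow> 'x) \<Rightarrow> bool" where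
  "boolean_set X B le p res \<longleftrightarrow>
     gen_boolean_algebra B le \<and>
     (\<forall>x\<in>X. p x \<in> B) \<and>
     (\<forall>e\<in>B. \<exists>x\<in>X. p x = e) \<and>
     (\<forall>x\<in>X. \<forall>f\<in>B. le f (p x) \<longrightarrow> res (p x) f x \<in> X \<and> p (res (p x) f x) = f) \<and>
     (\<forall>x\<in>X. res (p x) (p x) x = x) \<and>
     (\<forall>x\<in>X. \<forall>f\<in>B. \<forall>g\<in>B. le g f \<and> le f (p x) \<longrightarrow> res f g (res (p x) f x) = res (p x) g x) \<and>
     (\<exists>z. is_least X (bs_le B le p res) z \<and> (\<forall>x\<in>X. is_least B le (p x) \<longrightarrow> x = z)) \<and>
     (\<forall>x\<in>X. \<forall>y\<in>X. (\<exists>m. is_inf X (bs_le B le p res) x y m \<and> is_inf B le (p x) (p y) (p m))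
        \<longrightarrow> (\<exists>s. is_sup X (bs_le B le p res) x y s))"

definition bs_morphism ::
  "'x set \<Rightarrow> 'b set \<Rightarrow> ('b \<Rightarrow> 'b \<Rightarrow> bool) \<Rightarrow> ('x \<Rightarrow> 'b) \<Rightarrow> ('b \<Rightarrow> 'b \<Rightarrow> 'x \<Rightarrow> 'x) \<Rightarrow>
   'y set \<Rightarrow> 'c set \<Rightarrow> ('c \<Rightarrow> 'c \<Rightarrow> bool) \<Rightarrow> ('y \<Rightarrow> 'c) \<Rightarrow> ('c \<Rightarrow> 'c \<Rightarrow> 'y \<Rightarrow> 'y) \<Rightarrow>
   ('x \<Rightarrow> 'y) \<Rightarrow> ('b \<Rightarrow> 'c) \<Rightarrow> bool" where
  "bs_morphism X B le p res Y C le' q res' \<phi> \<phi>b \<longleftrightarrow>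
     \<phi> ` X \<subseteq> Y \<and> ba_hom B le C le' \<phi>b \<and>
     (\<forall>x\<in>X. q (\<phi> x) = \<phi>b (p x)) \<and>
     (\<forall>x\<in>X. \<forall>f\<in>B. le f (p x) \<longrightarrow> \<phi> (res (p x) f x) = res' (\<phi>b (p x)) (\<phi>b f) (\<phi> x))"

definition bs_iso ::
  "'x set \<Rightarrow> 'b set \<Rightarrow> ('b \<Rightarrow> 'b \<Rightarrow> bool) \<Rightarrow> ('x \<Rightarrow> 'b) \<Rightarrow> ('b \<Rightarrow> 'b \<Rightarrow> 'x \<Rightarrow> 'x) \<Rightarrow>
   'y set \<Rightarrow> 'c set \<Rightarrow> ('c \<Rightarrow> 'c \<Rightarrow> bool) \<Rightarrow> ('y \<Rightarrow> 'c) \<Rightarrow> ('c \<Rightarrow> 'c \<Rightarrow> 'y \<Rightarrow> 'y) \<Rightarrow>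
   ('x \<Rightarrow> 'y) \<Rightarrow> ('b \<Rightarrow> 'c) \<Rightarrow> bool" where
  "bs_iso X B le p res Y C le' q res' \<phi> \<phi>b \<longleftrightarrow>
     bs_morphism X B le p res Y C le' q res' \<phi> \<phi>b \<and>
     (\<exists>\<psi> \<psi>b. bs_morphism Y C le' q res' X B le p res \<psi> \<psi>b \<and>
        (\<forall>x\<in>X. \<psi> (\<phi> x) = x) \<and> (\<forall>y\<in>Y. \<phi> (\<psi> y) = y) \<and>
        (\<forall>b\<in>B. \<psi>b (\<phi>b b) = b) \<and> (\<forall>c\<in>C. \<phi>b (\<psi>b c) = c))"

definition proper_filter :: "'a set \<Rightarrow> ('a \<Rightarrow> 'a \<Rightarrow> bool) \<Rightarrow> 'a set \<Rightarrow> bool" where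
  "proper_filter A le F \<longleftrightarrow>
     F \<subseteq> A \<and> F \<noteq> {} \<and> F \<noteq> A \<and>
     (\<forall>x\<in>F. \<forall>y\<in>A. le x y \<longrightarrow> y \<in> F) \<and>
     (\<forall>x\<in>F. \<forall>y\<in>F. \<exists>z\<in>F. le z x \<and> le z y)"

definition ultrafilters :: "'a set \<Rightarrow> ('a \<Rightarrow> 'a \<Rightarrow> bool) \<Rightarrow> 'a set set" where
  "ultrafilters A le = {F. proper_filter A le F \<and> (\<forall>G. proper_filter A le G \<and> F \<subseteq> G \<longrightarrow> G = F)}"

definition dual_X :: "'x set \<Rightarrow> 'b set \<Rightarrow> ('b \<Rightarrow> 'b \<Rightarrow> bool) \<Rightarrow> ('x \<Rightarrow> 'b) \<Rightarrow> ('b \<Rightarrow> 'b \<Rightarrow> 'x \<Rightarrow> 'x) \<Rightarrow> 'x set set" where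
  "dual_X X B le p res = ultrafilters X (bs_le B le p res)"

definition L_set :: "'x set \<Rightarrow> 'b set \<Rightarrow> ('b \<Rightarrow> 'b \<Rightarrow> bool) \<Rightarrow> ('x \<Rightarrow> 'b) \<Rightarrow> ('b \<Rightarrow> 'b \<Rightarrow> 'x \<Rightarrow> 'x) \<Rightarrow> 'x \<Rightarrow> 'x set set" where
  "L_set X B le p res a = {G \<in> dual_X X B le p res. a \<in> G}"

definition M_set :: "'b set \<Rightarrow> ('b \<Rightarrow> 'b \<Rightarrow> bool) \<Rightarrow> 'b \<Rightarrow> 'b set set" where
  "M_set B le b = {F \<in> ultrafilters B le. b \<in> F}"

definition dual_X_top :: "'x set \<Rightarrow> 'b set \<Rightarrow> ('b \<Rightarrow> 'b \<Rightarrow> bool) \<Rightarrow> ('x \<Rightarrow> 'b) \<Rightarrow> ('b \<Rightarrow> 'b \<Rightarrow> 'x \<Rightarrow> 'x) \<Rightarrow> 'x set topology" where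
  "dual_X_top X B le p res = topology_generated_by (L_set X B le p res ` X)"

definition dual_B_top :: "'b set \<Rightarrow> ('b \<Rightarrow> 'b \<Rightarrow> bool) \<Rightarrow> 'b set topology" where
  "dual_B_top B le = topology_generated_by (M_set B le ` B)"

text \<open>The dual Boolean set of the \'etal\'e space (E, r, Z): compact-open local sections over
  compact-open subsets of Z, with C \<mapsto> r(C) and C|^A_A' = C \<inter> r^{-1}(A').\<close>

definition etale_sections :: "'e topology \<Rightarrow> ('e \<Rightarrow> 'z) \<Rightarrow> 'e set set" where
  "etale_sections TE r = {C. openin TE C \<and> compactin TE C \<and> inj_on r C}"

definition compact_opens :: "'z topology \<Rightarrow> 'z set set" where
  "compact_opens TZ = {A. openin TZ A \<and> compactin TZ A}"

definition etale_proj :: "('e \<Rightarrow> 'z) \<Rightarrow> 'e set \<Rightarrow> 'z set" where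
  "etale_proj r C = r ` C"

definition etale_res :: "'e topology \<Rightarrow> ('e \<Rightarrow> 'z) \<Rightarrow> 'z set \<Rightarrow> 'z set \<Rightarrow> 'e set \<Rightarrow> 'e set" where
  "etale_res TE r A A' C = C \<inter> {G \<in> topspace TE. r G \<in> A'}"

end

theory Submission
  imports Defs
begin


locale gba =
  fixes B :: "'b set" and le :: "'b \<Rightarrow> 'b \<Rightarrow> bool"
  assumes gba: "gen_boolean_algebra B le"
begin

lemma po: "partial_order_carrier B le" using gba unfolding gen_boolean_algebra_def by (rule conjunct1)
lemma ex_least: "\<exists>z. is_least B le z" using gba unfolding gen_boolean_algebra_def by (elim conjE)
lemma ex_inf_sup: "\<forall>a\<in>B. \<forall>b\<in>B. (\<exists>m. is_inf B le a b m) \<and> (\<exists>s. is_sup B le a b s)"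
  using gba unfolding gen_boolean_algebra_def by (elim conjE)
lemma distr_ax: "\<forall>a\<in>B. \<forall>b\<in>B. \<forall>c\<in>B. \<forall>s m mb mc.
        is_sup B le b c s \<and> is_inf B le a s m \<and> is_inf B le a b mb \<and> is_inf B le a c mc
        \<longrightarrow> is_sup B le mb mc m" using gba unfolding gen_boolean_algebra_def by (elim conjE)
lemma compl_ax: "\<forall>a\<in>B. \<forall>b\<in>B. \<forall>z. le a b \<and> is_least B le z \<longrightarrow>
        (\<exists>c\<in>B. is_inf B le a c z \<and> is_sup B le a c b)" using gba unfolding gen_boolean_algebra_def by (elim conjE)
lemma refl: "a \<in> B \<Longrightarrow> le a a" using po unfolding partial_order_carrier_def by blast
lemma antisym: "a \<in> B \<Longrightarrow> b \<in> B \<Longrightarrow> le a b \<Longrightarrow> le b a \<Longrightarrow> a = b"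
  using po unfolding partial_order_carrier_def by blast
lemma trans: "a \<in> B \<Longrightarrow> b \<in> B \<Longrightarrow> c \<in> B \<Longrightarrow> le a b \<Longrightarrow> le b c \<Longrightarrow> le a c"
  using po unfolding partial_order_carrier_def by blast

definition zero where "zero = (SOME z. is_least B le z)"
definition meet where "meet a b = (SOME m. is_inf B le a b m)"
definition join where "join a b = (SOME m. is_sup B le a b m)"

lemma zero_least: "is_least B le zero"
  using ex_least unfolding zero_def by (rule someI_ex)
lemma zero_in[simp]: "zero \<in> B" using zero_least unfolding is_least_def by blast
lemma zero_le: "a \<in> B \<Longrightarrow> le zero a" using zero_least unfolding is_least_def by blast
lemma le_zero: "a \<in> B \<Longrightarrow> le a zero \<Longrightarrow> a = zero" using zero_le antisym by auto
lemma is_least_zero: "is_least B le z \<longleftrightarrow> z = zero"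
  using zero_least antisym unfolding is_least_def by blast

lemma meet_inf: "a \<in> B \<Longrightarrow> b \<in> B \<Longrightarrow> is_inf B le a b (meet a b)"
  unfolding meet_def by (rule someI_ex) (use ex_inf_sup in blast)
lemma join_sup: "a \<in> B \<Longrightarrow> b \<in> B \<Longrightarrow> is_sup B le a b (join a b)"
  unfolding join_def by (rule someI_ex) (use ex_inf_sup in blast)
lemma inf_unique: "is_inf B le a b m \<Longrightarrow> is_inf B le a b m' \<Longrightarrow> m = m'"
  unfolding is_inf_def by (meson antisym)
lemma sup_unique: "is_sup B le a b m \<Longrightarrow> is_sup B le a b m' \<Longrightarrow> m = m'"
  unfolding is_sup_def by (meson antisym)
lemma is_inf_iff: "a \<in> B \<Longrightarrow> b \<in> B \<Longrightarrow> is_inf B le a b m \<longleftrightarrow> m = meet a b"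
  using meet_inf inf_unique by blast
lemma is_sup_iff: "a \<in> B \<Longrightarrow> b \<in> B \<Longrightarrow> is_sup B le a b m \<longleftrightarrow> m = join a b"
  using join_sup sup_unique by blast

lemma meet_in[simp]: "a \<in> B \<Longrightarrow> b \<in> B \<Longrightarrow> meet a b \<in> B" using meet_inf[of a b] unfolding is_inf_def by blast
lemma meet_le1: "a \<in> B \<Longrightarrow> b \<in> B \<Longrightarrow> le (meet a b) a" using meet_inf[of a b] unfolding is_inf_def by blast
lemma meet_le2: "a \<in> B \<Longrightarrow> b \<in> B \<Longrightarrow> le (meet a b) b" using meet_inf[of a b] unfolding is_inf_def by blast
lemma meet_glb: "a \<in> B \<Longrightarrow> b \<in> B \<Longrightarrow> c \<in> B \<Longrightarrow> le c a \<Longrightarrow> le c b \<Longrightarrow> le c (meet a b)"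
  using meet_inf[of a b] unfolding is_inf_def by blast
lemma join_in[simp]: "a \<in> B \<Longrightarrow> b \<in> B \<Longrightarrow> join a b \<in> B" using join_sup[of a b] unfolding is_sup_def by blast
lemma join_ge1: "a \<in> B \<Longrightarrow> b \<in> B \<Longrightarrow> le a (join a b)" using join_sup[of a b] unfolding is_sup_def by blast
lemma join_ge2: "a \<in> B \<Longrightarrow> b \<in> B \<Longrightarrow> le b (join a b)" using join_sup[of a b] unfolding is_sup_def by blast
lemma join_lub: "a \<in> B \<Longrightarrow> b \<in> B \<Longrightarrow> c \<in> B \<Longrightarrow> le a c \<Longrightarrow> le b c \<Longrightarrow> le (join a b) c"
  using join_sup[of a b] unfolding is_sup_def by blast

lemma meet_absorb: "a \<in> B \<Longrightarrow> b \<in> B \<Longrightarrow> le a b \<Longrightarrow> meet a b = a"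
  using antisym[OF meet_in[of a b] _ meet_le1[of a b] meet_glb[of a b a]] refl[of a] by blast
lemma join_absorb: "a \<in> B \<Longrightarrow> b \<in> B \<Longrightarrow> le a b \<Longrightarrow> join a b = b"
  using antisym[OF join_in[of a b] _ join_lub[of a b b] join_ge2[of a b]] refl[of b] by blast
lemma join_zero: "a \<in> B \<Longrightarrow> join zero a = a" using join_absorb[of zero a] zero_le[of a] by simp
lemma meet_comm: "a \<in> B \<Longrightarrow> b \<in> B \<Longrightarrow> meet a b = meet b a"
  using antisym[OF meet_in[of a b] meet_in[of b a] meet_glb[of b a "meet a b"] meet_glb[of a b "meet b a"]]
    meet_le1 meet_le2 by simp
lemma meet_mono2: assumes "a \<in> B" "b \<in> B" "a' \<in> B" "b' \<in> B" "le a a'" "le b b'"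
  shows "le (meet a b) (meet a' b')"
proof (rule meet_glb)
  show "le (meet a b) a'" using assms trans[of "meet a b" a a'] meet_le1 by simp
  show "le (meet a b) b'" using assms trans[of "meet a b" b b'] meet_le2 by simp
qed (use assms in auto)

lemma distrib: "a \<in> B \<Longrightarrow> b \<in> B \<Longrightarrow> c \<in> B \<Longrightarrow> meet a (join b c) = join (meet a b) (meet a c)"
proof -
  assume a: "a \<in> B" "b \<in> B" "c \<in> B"
  have "is_sup B le (meet a b) (meet a c) (meet a (join b c))"
    using distr_ax a join_sup[of b c] meet_inf[of a "join b c"] meet_inf[of a b] meet_inf[of a c] join_in[of b c] by blast
  thus ?thesis using a is_sup_iff by auto
qed

definition diff where "diff a b = (SOME d. d \<in> B \<and> is_inf B le (meet a b) d zero \<and> is_sup B le (meet a b) d a)"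

lemma diff_ex: "a \<in> B \<Longrightarrow> b \<in> B \<Longrightarrow> \<exists>d. d \<in> B \<and> is_inf B le (meet a b) d zero \<and> is_sup B le (meet a b) d a"
proof -
  assume ab: "a \<in> B" "b \<in> B"
  have "le (meet a b) a" "meet a b \<in> B" using ab meet_le1 by auto
  then obtain c where "c \<in> B" "is_inf B le (meet a b) c zero" "is_sup B le (meet a b) c a"
    using compl_ax zero_least ab by metis
  thus ?thesis by blast
qed

lemma diff_props: assumes "a \<in> B" "b \<in> B"
  shows "diff a b \<in> B" "meet (meet a b) (diff a b) = zero" "join (meet a b) (diff a b) = a"
proof -
  have "diff a b \<in> B \<and> is_inf B le (meet a b) (diff a b) zero \<and> is_sup B le (meet a b) (diff a b) a"
    unfolding diff_def using someI_ex[OF diff_ex[OF assms]] .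
  thus "diff a b \<in> B" "meet (meet a b) (diff a b) = zero" "join (meet a b) (diff a b) = a"
    using assms is_inf_iff is_sup_iff by auto
qed

lemma diff_in[simp]: "a \<in> B \<Longrightarrow> b \<in> B \<Longrightarrow> diff a b \<in> B" using diff_props by blast

lemma diff_le: assumes "a \<in> B" "b \<in> B" shows "le (diff a b) a"
  using diff_props[OF assms] assms join_ge2[of "meet a b" "diff a b"] by simp

lemma diff_meet: assumes "a \<in> B" "b \<in> B" shows "meet (diff a b) b = zero"
proof -
  have d: "diff a b \<in> B" using assms by simp
  have "le (meet (diff a b) b) (meet (meet a b) (diff a b))"
  proof (rule meet_glb)
    show "le (meet (diff a b) b) (meet a b)" using meet_mono2[of "diff a b" b a b] assms d diff_le refl by simp
  qed (use assms d meet_le1 in auto)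
  thus ?thesis using diff_props[OF assms] assms d le_zero by simp
qed

lemma le_diff: assumes "a \<in> B" "b \<in> B" "x \<in> B" "le x a" "meet x b = zero"
  shows "le x (diff a b)"
proof -
  have d: "diff a b \<in> B" using assms by simp
  have "x = meet x a" using assms meet_absorb by auto
  also have "\<dots> = join (meet x (meet a b)) (meet x (diff a b))"
    using distrib[of x "meet a b" "diff a b"] diff_props assms d by simp
  also have "meet x (meet a b) = zero"
  proof -
    have "le (meet x (meet a b)) (meet x b)" using assms meet_mono2[of x "meet a b" x b] refl meet_le2 by simp
    thus ?thesis using assms le_zero by simp
  qed
  finally have "x = meet x (diff a b)" using join_zero assms d by simp
  thus ?thesis using meet_le2[of x "diff a b"] assms d by simp
qed

lemma join_comm: "a \<in> B \<Longrightarrow> b \<in> B \<Longrightarrow> join a b = join b a"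
  using antisym[OF join_in[of a b] join_in[of b a] join_lub[of a b "join b a"] join_lub[of b a "join a b"]]
    join_ge1 join_ge2 by simp

lemma join_zero2: "a \<in> B \<Longrightarrow> join a zero = a"
  using join_absorb[of zero a] zero_le[of a] join_comm[of a zero] by simp

lemma diff_zero: assumes "a \<in> B" "b \<in> B" "diff a b = zero" shows "le a b"
proof -
  have "a = join (meet a b) zero" using diff_props(3)[OF assms(1,2)] assms(3) by simp
  also have "\<dots> = meet a b" using join_zero2 assms by simp
  finally show ?thesis using assms meet_le2[of a b] by simp
qed

end


lemma gen_local:
  assumes loc: "\<forall>s1\<in>S. \<forall>s2\<in>S. \<forall>x\<in>s1 \<inter> s2. \<exists>s3\<in>S. x \<in> s3 \<and> s3 \<subseteq> s1 \<inter> s2"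
    and op: "openin (topology_generated_by S) U"
  shows "\<forall>x\<in>U. \<exists>s\<in>S. x \<in> s \<and> s \<subseteq> U"
proof -
  have "generate_topology_on S U" using op by (rule openin_topology_generated_by)
  thus ?thesis
  proof (induction rule: generate_topology_on.induct)
    case Empty then show ?case by simp
  next
    case (Int a b)
    show ?case
    proof
      fix x assume "x \<in> a \<inter> b"
      then obtain s1 s2 where "s1 \<in> S" "x \<in> s1" "s1 \<subseteq> a" "s2 \<in> S" "x \<in> s2" "s2 \<subseteq> b"
        using Int.IH by blast
      then obtain s3 where "s3 \<in> S" "x \<in> s3" "s3 \<subseteq> s1 \<inter> s2" using loc[rule_format, of s1 s2 x] by blast
      thus "\<exists>s\<in>S. x \<in> s \<and> s \<subseteq> a \<inter> b" using \<open>s1 \<subseteq> a\<close> \<open>s2 \<subseteq> b\<close> by blast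
    qed
  next
    case (UN K)
    show ?case
    proof
      fix x assume "x \<in> \<Union>K"
      then obtain k where "k \<in> K" "x \<in> k" by blast
      then obtain s where "s \<in> S" "x \<in> s" "s \<subseteq> k" using UN.IH by blast
      thus "\<exists>s\<in>S. x \<in> s \<and> s \<subseteq> \<Union>K" using \<open>k \<in> K\<close> by blast
    qed
  next
    case (Basis s) thus ?case by blast
  qed
qed

lemma gen_compact:
  assumes loc: "\<forall>s1\<in>S. \<forall>s2\<in>S. \<forall>x\<in>s1 \<inter> s2. \<exists>s3\<in>S. x \<in> s3 \<and> s3 \<subseteq> s1 \<inter> s2"
    and KS: "K \<subseteq> \<Union>S"
    and fin: "\<And>S'. S' \<subseteq> S \<Longrightarrow> K \<subseteq> \<Union>S' \<Longrightarrow> \<exists>T. T \<subseteq> S' \<and> finite T \<and> K \<subseteq> \<Union>T"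
  shows "compactin (topology_generated_by S) K"
  unfolding compactin_def
proof (intro conjI allI impI)
  show "K \<subseteq> topspace (topology_generated_by S)" using KS by simp
  fix \<U> assume a: "(\<forall>U\<in>\<U>. openin (topology_generated_by S) U) \<and> K \<subseteq> \<Union>\<U>"
  define S' where "S' = {s\<in>S. \<exists>U\<in>\<U>. s \<subseteq> U}"
  have "K \<subseteq> \<Union>S'"
  proof
    fix x assume "x \<in> K"
    then obtain U where "U \<in> \<U>" "x \<in> U" using a by blast
    moreover have "openin (topology_generated_by S) U" using a \<open>U \<in> \<U>\<close> by blast
    ultimately obtain s where "s \<in> S" "x \<in> s" "s \<subseteq> U" using gen_local[OF loc, of U] by blast
    thus "x \<in> \<Union>S'" unfolding S'_def using \<open>U \<in> \<U>\<close> by blast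
  qed
  moreover have "S' \<subseteq> S" unfolding S'_def by blast
  ultimately obtain T where T: "T \<subseteq> S'" "finite T" "K \<subseteq> \<Union>T" using fin[of S'] by blast
  have "\<forall>s\<in>T. \<exists>U. U \<in> \<U> \<and> s \<subseteq> U" using T(1) unfolding S'_def by blast
  hence "\<exists>f. \<forall>s\<in>T. f s \<in> \<U> \<and> s \<subseteq> f s" by (rule bchoice)
  then obtain f where f: "\<forall>s\<in>T. f s \<in> \<U> \<and> s \<subseteq> f s" by blast
  show "\<exists>\<F>. finite \<F> \<and> \<F> \<subseteq> \<U> \<and> K \<subseteq> \<Union>\<F>"
  proof (intro exI conjI)
    show "finite (f ` T)" using T by simp
    show "f ` T \<subseteq> \<U>" using f by blast
    show "K \<subseteq> \<Union>(f ` T)" using T(3) f by blast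
  qed
qed

context gba begin

abbreviation PF where "PF \<equiv> proper_filter B le"
abbreviation UF where "UF \<equiv> ultrafilters B le"
abbreviation M where "M \<equiv> M_set B le"

lemma pf_sub: "PF F \<Longrightarrow> F \<subseteq> B" unfolding proper_filter_def by blast
lemma pf_ne: "PF F \<Longrightarrow> F \<noteq> {}" unfolding proper_filter_def by blast
lemma pf_up: "PF F \<Longrightarrow> x \<in> F \<Longrightarrow> y \<in> B \<Longrightarrow> le x y \<Longrightarrow> y \<in> F" unfolding proper_filter_def by blast
lemma pf_dir: "PF F \<Longrightarrow> x \<in> F \<Longrightarrow> y \<in> F \<Longrightarrow> \<exists>z\<in>F. le z x \<and> le z y" unfolding proper_filter_def by blast
lemma pf_zero: assumes "PF F" shows "zero \<notin> F"
proof
  assume "zero \<in> F"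
  hence "B \<subseteq> F" using pf_up[OF assms] zero_le by blast
  thus False using assms unfolding proper_filter_def by blast
qed
lemma pf_meet: assumes "PF F" "x \<in> F" "y \<in> F" shows "meet x y \<in> F"
proof -
  obtain z where "z \<in> F" "le z x" "le z y" using pf_dir[OF assms] by blast
  moreover have "x \<in> B" "y \<in> B" "z \<in> B" using assms pf_sub \<open>z \<in> F\<close> by auto
  ultimately show ?thesis using pf_up[OF assms(1), of z "meet x y"] meet_glb by simp
qed
lemma pf_intro:
  assumes "F \<subseteq> B" "F \<noteq> {}" "zero \<notin> F" "\<And>x y. x \<in> F \<Longrightarrow> y \<in> B \<Longrightarrow> le x y \<Longrightarrow> y \<in> F"
    "\<And>x y. x \<in> F \<Longrightarrow> y \<in> F \<Longrightarrow> \<exists>z\<in>F. le z x \<and> le z y"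
  shows "PF F"
  unfolding proper_filter_def using assms zero_in by blast

lemma uf_pf: "F \<in> UF \<Longrightarrow> PF F" unfolding ultrafilters_def by blast
lemma uf_max: "F \<in> UF \<Longrightarrow> PF G \<Longrightarrow> F \<subseteq> G \<Longrightarrow> G = F" unfolding ultrafilters_def by blast

lemma uf_ext: assumes "PF \<Phi>" shows "\<exists>F\<in>UF. \<Phi> \<subseteq> F"
proof -
  define A where "A = {G. PF G \<and> \<Phi> \<subseteq> G}"
  have "\<exists>U\<in>A. \<forall>X\<in>C. X \<subseteq> U" if ch: "subset.chain A C" for C
  proof (cases "C = {}")
    case True thus ?thesis using assms unfolding A_def by blast
  next
    case False
    have CA: "C \<subseteq> A" and cmp: "\<forall>x\<in>C. \<forall>y\<in>C. x \<subseteq> y \<or> y \<subseteq> x"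
      using ch unfolding subset.chain_def by auto
    have "PF (\<Union>C)"
    proof (rule pf_intro)
      show "\<Union>C \<subseteq> B" using CA pf_sub unfolding A_def by blast
      show "\<Union>C \<noteq> {}" using False CA pf_ne unfolding A_def by blast
      show "zero \<notin> \<Union>C" using CA pf_zero unfolding A_def by blast
      show "y \<in> \<Union>C" if hh: "x \<in> \<Union>C" "y \<in> B" "le x y" for x y
        using hh CA pf_up unfolding A_def by blast
      show "\<exists>z\<in>\<Union>C. le z x \<and> le z y" if xy: "x \<in> \<Union>C" "y \<in> \<Union>C" for x y
      proof -
        obtain X Y where XY: "X \<in> C" "Y \<in> C" "x \<in> X" "y \<in> Y" using xy by blast
        show ?thesis
        proof (cases "X \<subseteq> Y")
          case True
          then obtain z where "z \<in> Y" "le z x" "le z y" using pf_dir[of Y x y] XY CA unfolding A_def by blast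
          thus ?thesis using XY by blast
        next
          case False
          hence "Y \<subseteq> X" using cmp XY by blast
          then obtain z where "z \<in> X" "le z x" "le z y" using pf_dir[of X x y] XY CA unfolding A_def by blast
          thus ?thesis using XY by blast
        qed
      qed
    qed
    moreover have "\<Phi> \<subseteq> \<Union>C" using False CA unfolding A_def by blast
    ultimately show ?thesis unfolding A_def by blast
  qed
  then obtain F where F: "F \<in> A" "\<forall>X\<in>A. F \<subseteq> X \<longrightarrow> X = F"
    using subset_Zorn[of A] by blast
  have "F \<in> UF" unfolding ultrafilters_def
  proof (intro CollectI conjI allI impI)
    show "PF F" using F unfolding A_def by blast
    fix G assume "PF G \<and> F \<subseteq> G"
    thus "G = F" using F unfolding A_def by blast
  qed
  thus ?thesis using F unfolding A_def by blast
qed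

lemma uf_notin: assumes F: "F \<in> UF" and a: "a \<in> B" "a \<notin> F" shows "\<exists>f\<in>F. meet f a = zero"
proof (rule ccontr)
  assume nz: "\<not> (\<exists>f\<in>F. meet f a = zero)"
  have PF: "PF F" using F uf_pf by blast
  have FB: "F \<subseteq> B" using pf_sub[OF PF] .
  define G where "G = {x\<in>B. \<exists>f\<in>F. le (meet f a) x}"
  have "PF G"
  proof (rule pf_intro)
    show "G \<subseteq> B" unfolding G_def by blast
    obtain f where f: "f \<in> F" using pf_ne[OF PF] by blast
    hence "le (meet f a) a" using meet_le2 FB a by blast
    thus "G \<noteq> {}" unfolding G_def using f a by blast
    show "zero \<notin> G"
    proof
      assume "zero \<in> G"
      then obtain f where "f \<in> F" "le (meet f a) zero" unfolding G_def by blast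
      moreover have "f \<in> B" using FB \<open>f \<in> F\<close> by blast
      ultimately have "meet f a = zero" using le_zero[of "meet f a"] a by simp
      thus False using nz \<open>f \<in> F\<close> by blast
    qed
    show "y \<in> G" if hh: "x \<in> G" "y \<in> B" "le x y" for x y
    proof -
      obtain f where "f \<in> F" "le (meet f a) x" "x \<in> B" using hh unfolding G_def by blast
      moreover have "meet f a \<in> B" using FB a \<open>f \<in> F\<close> meet_in by blast
      ultimately have "le (meet f a) y" using trans that by blast
      thus ?thesis unfolding G_def using hh \<open>f \<in> F\<close> by blast
    qed
    show "\<exists>z\<in>G. le z x \<and> le z y" if hh: "x \<in> G" "y \<in> G" for x y
    proof -
      obtain f where f: "f \<in> F" "le (meet f a) x" "x \<in> B" using hh unfolding G_def by blast
      obtain g where g: "g \<in> F" "le (meet g a) y" "y \<in> B" using hh unfolding G_def by blast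
      have fg: "meet f g \<in> F" using pf_meet PF f g by blast
      have B: "f \<in> B" "g \<in> B" "meet f g \<in> B" using f g fg FB by auto
      define z where "z = meet (meet f g) a"
      have zB: "z \<in> B" using B a unfolding z_def by simp
      have "le z (meet f a)" unfolding z_def using meet_mono2[of "meet f g" a f a] B a meet_le1 refl by simp
      hence zx: "le z x" using trans[of z "meet f a" x] zB f B a by simp
      have "le z (meet g a)" unfolding z_def using meet_mono2[of "meet f g" a g a] B a meet_le2 refl by simp
      hence zy: "le z y" using trans[of z "meet g a" y] zB g B a by simp
      have "z \<in> G" unfolding G_def z_def using zB fg refl z_def by auto
      thus ?thesis using zx zy by blast
    qed
  qed
  moreover have "F \<subseteq> G"
  proof
    fix f assume "f \<in> F"
    thus "f \<in> G" unfolding G_def using meet_le1 FB a by blast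
  qed
  ultimately have "G = F" using uf_max F by blast
  moreover have "a \<in> G" unfolding G_def using a pf_ne[OF PF] FB meet_le2 by blast
  ultimately show False using a by blast
qed

lemma uf_prime: assumes F: "F \<in> UF" and ab: "a \<in> B" "b \<in> B" "join a b \<in> F"
  shows "a \<in> F \<or> b \<in> F"
proof (rule ccontr)
  assume "\<not> (a \<in> F \<or> b \<in> F)"
  hence "a \<notin> F" "b \<notin> F" by auto
  then obtain f g where fg: "f \<in> F" "meet f a = zero" "g \<in> F" "meet g b = zero"
    using uf_notin[OF F ab(1)] uf_notin[OF F ab(2)] by blast
  have PF: "PF F" using F uf_pf by blast
  have FB: "F \<subseteq> B" using pf_sub[OF PF] .
  have B: "f \<in> B" "g \<in> B" using fg FB by auto
  define h where "h = meet f g"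
  have h: "h \<in> F" "h \<in> B" using pf_meet[OF PF] fg B unfolding h_def by auto
  have "meet h (join a b) \<in> F" using pf_meet[OF PF] h ab by blast
  also have "meet h (join a b) = join (meet h a) (meet h b)" using distrib h ab by simp
  also have "meet h a = zero"
  proof -
    have "le (meet h a) (meet f a)" unfolding h_def using meet_mono2[of "meet f g" a f a] B ab meet_le1 refl by simp
    thus ?thesis using fg le_zero h ab by simp
  qed
  also have "meet h b = zero"
  proof -
    have "le (meet h b) (meet g b)" unfolding h_def using meet_mono2[of "meet f g" b g b] B ab meet_le2 refl by simp
    thus ?thesis using fg le_zero h ab by simp
  qed
  finally have "zero \<in> F" using join_zero by simp
  thus False using pf_zero[OF PF] by blast
qed

lemma M_def2: "M b = {F \<in> UF. b \<in> F}" unfolding M_set_def by simp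

lemma uf_sub: "F \<in> UF \<Longrightarrow> F \<subseteq> B" using uf_pf pf_sub by blast

lemma M_meet: assumes "a \<in> B" "b \<in> B" shows "M (meet a b) = M a \<inter> M b"
proof -
  have "meet a b \<in> F \<longleftrightarrow> a \<in> F \<and> b \<in> F" if hh: "F \<in> UF" for F
  proof
    have P: "PF F" using uf_pf hh by blast
    show "meet a b \<in> F \<Longrightarrow> a \<in> F \<and> b \<in> F"
      using pf_up[OF P, of "meet a b" a] pf_up[OF P, of "meet a b" b] assms meet_le1 meet_le2 by simp
    show "a \<in> F \<and> b \<in> F \<Longrightarrow> meet a b \<in> F" using pf_meet[OF P] by blast
  qed
  thus ?thesis unfolding M_def2 by blast
qed

lemma M_join: assumes "a \<in> B" "b \<in> B" shows "M (join a b) = M a \<union> M b"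
proof -
  have "join a b \<in> F \<longleftrightarrow> a \<in> F \<or> b \<in> F" if hh: "F \<in> UF" for F
  proof
    have P: "PF F" using uf_pf hh by blast
    show "join a b \<in> F \<Longrightarrow> a \<in> F \<or> b \<in> F" using uf_prime[OF hh assms] by blast
    show "a \<in> F \<or> b \<in> F \<Longrightarrow> join a b \<in> F"
      using pf_up[OF P, of a "join a b"] pf_up[OF P, of b "join a b"] assms join_ge1 join_ge2 by auto
  qed
  thus ?thesis unfolding M_def2 by blast
qed

lemma M_zero: "M zero = {}" unfolding M_def2 using uf_pf pf_zero by blast

lemma M_mono: assumes "a \<in> B" "b \<in> B" "le a b" shows "M a \<subseteq> M b"
  unfolding M_def2 using uf_pf pf_up[of _ a b] assms by blast

lemma uf_separate: assumes ab: "a \<in> B" "b \<in> B" "\<not> le a b" shows "\<exists>F\<in>UF. a \<in> F \<and> b \<notin> F"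
proof -
  define d where "d = diff a b"
  have d: "d \<in> B" "le d a" "meet d b = zero" "d \<noteq> zero"
    using ab diff_le diff_meet diff_zero unfolding d_def by auto
  define \<Phi> where "\<Phi> = {x\<in>B. le d x}"
  have "PF \<Phi>"
  proof (rule pf_intro)
    show "\<Phi> \<subseteq> B" unfolding \<Phi>_def by blast
    show "\<Phi> \<noteq> {}" unfolding \<Phi>_def using d refl by blast
    show "zero \<notin> \<Phi>" unfolding \<Phi>_def using d le_zero by blast
    show "y \<in> \<Phi>" if hh: "x \<in> \<Phi>" "y \<in> B" "le x y" for x y
      using hh trans d unfolding \<Phi>_def by blast
    show "\<exists>z\<in>\<Phi>. le z x \<and> le z y" if hh: "x \<in> \<Phi>" "y \<in> \<Phi>" for x y
      using hh d refl unfolding \<Phi>_def by blast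
  qed
  then obtain F where F: "F \<in> UF" "\<Phi> \<subseteq> F" using uf_ext by blast
  have dF: "d \<in> F" using F d refl unfolding \<Phi>_def by blast
  have "a \<in> F" using pf_up[OF uf_pf[OF F(1)] dF] ab d by blast
  moreover have "b \<notin> F"
  proof
    assume "b \<in> F"
    hence "meet d b \<in> F" using pf_meet[OF uf_pf[OF F(1)] dF] by blast
    thus False using d pf_zero[OF uf_pf[OF F(1)]] by simp
  qed
  ultimately show ?thesis using F by blast
qed

lemma M_le_iff: assumes "a \<in> B" "b \<in> B" shows "M a \<subseteq> M b \<longleftrightarrow> le a b"
proof
  show "M a \<subseteq> M b \<Longrightarrow> le a b" using uf_separate[OF assms] unfolding M_def2 by blast
qed (use M_mono[OF assms] in blast)

lemma M_inj: assumes "a \<in> B" "b \<in> B" "M a = M b" shows "a = b"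
  using M_le_iff[of a b] M_le_iff[of b a] assms antisym by simp

lemma diff_anti: assumes "b \<in> B" "y \<in> B" "y' \<in> B" "le y y'" shows "le (diff b y') (diff b y)"
proof (rule le_diff)
  show "le (diff b y') b" using diff_le assms by simp
  have "le (meet (diff b y') y) (meet (diff b y') y')"
    using meet_mono2[of "diff b y'" y "diff b y'" y'] assms refl by simp
  thus "meet (diff b y') y = zero" using diff_meet assms le_zero by simp
qed (use assms in auto)

lemma finite_cover: assumes S: "S \<subseteq> B" and b: "b \<in> B" and cov: "M b \<subseteq> \<Union>(M ` S)"
  shows "\<exists>T. T \<subseteq> S \<and> finite T \<and> M b \<subseteq> \<Union>(M ` T)"
proof (rule ccontr)
  assume nc: "\<not> ?thesis"
  define I where "I = {y\<in>B. \<exists>T. finite T \<and> T \<subseteq> S \<and> M y \<subseteq> \<Union>(M ` T)}"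
  have I0: "zero \<in> I" unfolding I_def using M_zero by (intro CollectI conjI exI[of _ "{}"]) auto
  have Ij: "join y y' \<in> I" if hh: "y \<in> I" "y' \<in> I" for y y'
  proof -
    obtain T T' where "finite T" "T \<subseteq> S" "M y \<subseteq> \<Union>(M ` T)" "finite T'" "T' \<subseteq> S" "M y' \<subseteq> \<Union>(M ` T')" "y \<in> B" "y' \<in> B"
      using hh unfolding I_def by blast
    thus ?thesis unfolding I_def using M_join[of y y'] by (intro CollectI conjI exI[of _ "T \<union> T'"]) auto
  qed
  have Ib: "b \<notin> I" using nc unfolding I_def by blast
  define \<Phi> where "\<Phi> = {x\<in>B. \<exists>y\<in>I. le (diff b y) x}"
  have "PF \<Phi>"
  proof (rule pf_intro)
    show "\<Phi> \<subseteq> B" unfolding \<Phi>_def by blast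
    have "le (diff b zero) b" using diff_le b by simp
    thus "\<Phi> \<noteq> {}" unfolding \<Phi>_def using I0 b by blast
    show "zero \<notin> \<Phi>"
    proof
      assume "zero \<in> \<Phi>"
      then obtain y where y: "y \<in> I" "le (diff b y) zero" unfolding \<Phi>_def by blast
      have yB: "y \<in> B" using y I_def by blast
      hence "diff b y = zero" using le_zero y b by simp
      hence "le b y" using diff_zero b yB by blast
      hence "M b \<subseteq> M y" using M_mono b yB by blast
      hence "b \<in> I" using y b unfolding I_def by blast
      thus False using Ib by blast
    qed
    show "y \<in> \<Phi>" if hh: "x \<in> \<Phi>" "y \<in> B" "le x y" for x y
    proof -
      obtain w where "w \<in> I" "le (diff b w) x" "x \<in> B" using hh unfolding \<Phi>_def by blast
      moreover have "diff b w \<in> B" using \<open>w \<in> I\<close> b I_def by simp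
      ultimately show ?thesis using hh trans unfolding \<Phi>_def by blast
    qed
    show "\<exists>z\<in>\<Phi>. le z x \<and> le z y" if hh: "x \<in> \<Phi>" "y \<in> \<Phi>" for x y
    proof -
      obtain w w' where w: "w \<in> I" "le (diff b w) x" "x \<in> B" "w' \<in> I" "le (diff b w') y" "y \<in> B"
        using hh unfolding \<Phi>_def by blast
      have wB: "w \<in> B" "w' \<in> B" using w I_def by auto
      define v where "v = join w w'"
      have v: "v \<in> I" "v \<in> B" using Ij w wB unfolding v_def by auto
      have "le (diff b v) (diff b w)" using diff_anti b wB v join_ge1 unfolding v_def by simp
      hence 1: "le (diff b v) x" using trans[of "diff b v" "diff b w" x] b v wB w by simp
      have "le (diff b v) (diff b w')" using diff_anti b wB v join_ge2 unfolding v_def by simp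
      hence 2: "le (diff b v) y" using trans[of "diff b v" "diff b w'" y] b v wB w by simp
      have "diff b v \<in> \<Phi>" unfolding \<Phi>_def using v b refl[of "diff b v"] by auto
      thus ?thesis using 1 2 by blast
    qed
  qed
  then obtain F where F: "F \<in> UF" "\<Phi> \<subseteq> F" using uf_ext by blast
  have "b \<in> \<Phi>" unfolding \<Phi>_def using I0 b diff_le[of b zero] by auto
  hence "F \<in> M b" using F unfolding M_def2 by blast
  then obtain c where c: "c \<in> S" "c \<in> F" using cov unfolding M_def2 by blast
  have cB: "c \<in> B" using c S by blast
  have "c \<in> I" unfolding I_def using c cB by (intro CollectI conjI exI[of _ "{c}"]) auto
  hence "diff b c \<in> \<Phi>" unfolding \<Phi>_def using b cB refl[of "diff b c"] by auto
  hence "meet (diff b c) c \<in> F" using F c pf_meet uf_pf by blast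
  thus False using diff_meet b cB pf_zero uf_pf F by simp
qed

end


context gba begin

abbreviation TB where "TB \<equiv> dual_B_top B le"

lemma TB_def2: "TB = topology_generated_by (M ` B)" unfolding dual_B_top_def by simp

lemma M_loc: "\<forall>s1\<in>M ` B. \<forall>s2\<in>M ` B. \<forall>x\<in>s1 \<inter> s2. \<exists>s3\<in>M ` B. x \<in> s3 \<and> s3 \<subseteq> s1 \<inter> s2"
proof (intro ballI)
  fix s1 s2 x assume "s1 \<in> M ` B" "s2 \<in> M ` B" "x \<in> s1 \<inter> s2"
  then obtain a b where ab: "a \<in> B" "b \<in> B" "s1 = M a" "s2 = M b" by blast
  hence "M (meet a b) = s1 \<inter> s2" using M_meet by simp
  moreover have "meet a b \<in> B" using ab by simp
  ultimately show "\<exists>s3\<in>M ` B. x \<in> s3 \<and> s3 \<subseteq> s1 \<inter> s2" using \<open>x \<in> s1 \<inter> s2\<close> by blast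
qed

lemma M_open: "b \<in> B \<Longrightarrow> openin TB (M b)"
  unfolding TB_def2 by (rule topology_generated_by_Basis) blast

lemma M_compact: assumes b: "b \<in> B" shows "compactin TB (M b)"
  unfolding TB_def2
proof (rule gen_compact)
  show "M b \<subseteq> \<Union>(M ` B)" using b by blast
  fix S' assume S': "S' \<subseteq> M ` B" "M b \<subseteq> \<Union>S'"
  define S0 where "S0 = {c\<in>B. M c \<in> S'}"
  have "S' = M ` S0" using S' unfolding S0_def by blast
  hence "M b \<subseteq> \<Union>(M ` S0)" using S' by simp
  then obtain T0 where T0: "T0 \<subseteq> S0" "finite T0" "M b \<subseteq> \<Union>(M ` T0)"
    using finite_cover[of S0 b] b unfolding S0_def by blast
  show "\<exists>T. T \<subseteq> S' \<and> finite T \<and> M b \<subseteq> \<Union>T"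
    using T0 unfolding S0_def by (intro exI[of _ "M ` T0"]) auto
qed (rule M_loc)

lemma M_union_fin: "finite \<F> \<Longrightarrow> \<F> \<subseteq> M ` B \<Longrightarrow> \<exists>b\<in>B. \<Union>\<F> = M b"
proof (induction \<F> rule: finite_induct)
  case empty
  then show ?case using M_zero zero_in by (intro bexI[of _ zero]) auto
next
  case (insert s \<F>)
  then obtain b where b: "b \<in> B" "\<Union>\<F> = M b" by blast
  obtain c where c: "c \<in> B" "s = M c" using insert by blast
  have "\<Union>(insert s \<F>) = M (join c b)" using M_join b c by simp
  thus ?case using b c join_in by blast
qed

lemma compact_opens_eq: "compact_opens TB = M ` B"
proof
  show "M ` B \<subseteq> compact_opens TB" unfolding compact_opens_def using M_open M_compact by blast
  show "compact_opens TB \<subseteq> M ` B"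
  proof
    fix U assume "U \<in> compact_opens TB"
    hence U: "openin TB U" "compactin TB U" unfolding compact_opens_def by auto
    define S' where "S' = {s \<in> M ` B. s \<subseteq> U}"
    have "openin (topology_generated_by (M ` B)) U" using U(1) TB_def2 by simp
    hence "\<forall>x\<in>U. \<exists>s\<in>M ` B. x \<in> s \<and> s \<subseteq> U"
      by (rule gen_local[OF M_loc])
    hence cov: "U \<subseteq> \<Union>S'" unfolding S'_def by blast
    have opS: "\<forall>s\<in>S'. openin TB s" unfolding S'_def using M_open by blast
    have cp: "\<And>\<U>. (\<forall>U\<in>\<U>. openin TB U) \<Longrightarrow> U \<subseteq> \<Union>\<U> \<Longrightarrow> \<exists>\<F>. finite \<F> \<and> \<F> \<subseteq> \<U> \<and> U \<subseteq> \<Union>\<F>"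
      using U(2) unfolding compactin_def by blast
    obtain \<F> where F: "finite \<F>" "\<F> \<subseteq> S'" "U \<subseteq> \<Union>\<F>"
      using cp[OF opS cov] by blast
    have "\<Union>\<F> \<subseteq> U" using F unfolding S'_def by blast
    hence "U = \<Union>\<F>" using F by blast
    moreover have "\<F> \<subseteq> M ` B" using F unfolding S'_def by blast
    ultimately show "U \<in> M ` B" using M_union_fin[OF F(1)] by auto
  qed
qed

end


locale bset =
  fixes X :: "'x set" and B :: "'b set" and le :: "'b \<Rightarrow> 'b \<Rightarrow> bool"
    and p :: "'x \<Rightarrow> 'b" and res :: "'b \<Rightarrow> 'b \<Rightarrow> 'x \<Rightarrow> 'x"
  assumes bs: "boolean_set X B le p res"
begin

lemma gba_ax: "gen_boolean_algebra B le" using bs unfolding boolean_set_def by (elim conjE)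

sublocale gba B le by (rule gba.intro, rule gba_ax)

abbreviation bsle where "bsle \<equiv> bs_le B le p res"
abbreviation rs where "rs x f \<equiv> res (p x) f x"

lemma p_in: "x \<in> X \<Longrightarrow> p x \<in> B" using bs unfolding boolean_set_def by (elim conjE) blast
lemma p_surj: "e \<in> B \<Longrightarrow> \<exists>x\<in>X. p x = e" using bs unfolding boolean_set_def by (elim conjE) blast
lemma rs_ax: "x \<in> X \<Longrightarrow> f \<in> B \<Longrightarrow> le f (p x) \<Longrightarrow> rs x f \<in> X \<and> p (rs x f) = f"
  using bs unfolding boolean_set_def by (elim conjE) blast
lemma rs_in: "x \<in> X \<Longrightarrow> f \<in> B \<Longrightarrow> le f (p x) \<Longrightarrow> rs x f \<in> X" using rs_ax by blast
lemma p_rs: "x \<in> X \<Longrightarrow> f \<in> B \<Longrightarrow> le f (p x) \<Longrightarrow> p (rs x f) = f" using rs_ax by blast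
lemma rs_id: "x \<in> X \<Longrightarrow> rs x (p x) = x" using bs unfolding boolean_set_def by (elim conjE) blast
lemma rs_comp_ax: "x \<in> X \<Longrightarrow> f \<in> B \<Longrightarrow> g \<in> B \<Longrightarrow> le g f \<Longrightarrow> le f (p x) \<Longrightarrow> res f g (res (p x) f x) = res (p x) g x"
  using bs unfolding boolean_set_def by (elim conjE) blast
lemma rs_comp: "x \<in> X \<Longrightarrow> f \<in> B \<Longrightarrow> g \<in> B \<Longrightarrow> le g f \<Longrightarrow> le f (p x) \<Longrightarrow> rs (rs x f) g = rs x g"
  using rs_comp_ax p_rs by simp
lemma least_ax: "\<exists>z. is_least X bsle z \<and> (\<forall>x\<in>X. is_least B le (p x) \<longrightarrow> x = z)"
  using bs unfolding boolean_set_def by (elim conjE)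
lemma join_ax: "\<forall>x\<in>X. \<forall>y\<in>X. (\<exists>m. is_inf X bsle x y m \<and> is_inf B le (p x) (p y) (p m))
        \<longrightarrow> (\<exists>s. is_sup X bsle x y s)"
  using bs unfolding boolean_set_def by (elim conjE)
lemma join_ex: "x \<in> X \<Longrightarrow> y \<in> X \<Longrightarrow> is_inf X bsle x y m \<Longrightarrow> is_inf B le (p x) (p y) (p m) \<Longrightarrow> \<exists>s. is_sup X bsle x y s"
  using join_ax by blast

lemma bsle_iff: "bsle x y \<longleftrightarrow> le (p x) (p y) \<and> x = rs y (p x)" unfolding bs_le_def by simp

lemma rs_le: "x \<in> X \<Longrightarrow> f \<in> B \<Longrightarrow> le f (p x) \<Longrightarrow> bsle (rs x f) x"
  unfolding bsle_iff using p_rs by simp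

lemma bsle_refl: "x \<in> X \<Longrightarrow> bsle x x" unfolding bsle_iff using rs_id refl p_in by simp

definition z0 where "z0 = (SOME z. is_least X bsle z \<and> (\<forall>x\<in>X. is_least B le (p x) \<longrightarrow> x = z))"
lemma z0_prop: "is_least X bsle z0 \<and> (\<forall>x\<in>X. is_least B le (p x) \<longrightarrow> x = z0)"
  unfolding z0_def by (rule someI_ex, rule least_ax)
lemma z0_in: "z0 \<in> X" using z0_prop unfolding is_least_def by blast
lemma z0_le: "x \<in> X \<Longrightarrow> bsle z0 x" using z0_prop unfolding is_least_def by blast
lemma z0_uniq: "x \<in> X \<Longrightarrow> p x = zero \<Longrightarrow> x = z0" using z0_prop is_least_zero by blast
lemma p_z0: "p z0 = zero"
proof -
  obtain x where "x \<in> X" "p x = zero" using p_surj zero_in by blast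
  thus ?thesis using z0_uniq by simp
qed

lemma bsle_p: "bsle x y \<Longrightarrow> le (p x) (p y)" unfolding bsle_iff by simp
lemma bsle_rs: "bsle x y \<Longrightarrow> x = rs y (p x)" unfolding bsle_iff by simp

lemma rs_below: assumes "g \<in> X" "h \<in> X" "bsle h g" "c \<in> B" "le c (p h)" shows "rs g c = rs h c"
proof -
  have "h = rs g (p h)" using bsle_rs assms by blast
  hence "rs h c = rs (rs g (p h)) c" by simp
  also have "\<dots> = rs g c" using rs_comp[of g "p h" c] assms p_in bsle_p by simp
  finally show ?thesis by simp
qed

lemma ext: assumes x: "x \<in> X" and b: "b \<in> B" "le (p x) b" shows "\<exists>y\<in>X. p y = b \<and> bsle x y"
proof -
  have px: "p x \<in> B" using p_in x by simp
  define d where "d = diff b (p x)"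
  have d: "d \<in> B" "meet d (p x) = zero" using b px diff_meet unfolding d_def by auto
  obtain w where w: "w \<in> X" "p w = d" using p_surj d by blast
  have inf: "is_inf X bsle x w z0" unfolding is_inf_def
  proof (intro conjI ballI impI)
    show "z0 \<in> X" "bsle z0 x" "bsle z0 w" using z0_in z0_le x w by auto
    fix c assume c: "c \<in> X" "bsle c x \<and> bsle c w"
    have "le (p c) (p x)" "le (p c) (p w)" using c bsle_p by auto
    hence "le (p c) (meet d (p x))" using meet_glb[of d "p x" "p c"] c d px p_in w by simp
    hence "p c = zero" using d le_zero p_in c by simp
    hence "c = z0" using z0_uniq c by simp
    thus "bsle c z0" using bsle_refl z0_in by simp
  qed
  have "is_inf B le (p x) (p w) (p z0)" using is_inf_iff[of "p x" d] px d w p_z0 meet_comm by simp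
  then obtain s where s: "is_sup X bsle x w s" using join_ex[OF x w(1) inf] by blast
  have sX: "s \<in> X" "bsle x s" "bsle w s" using s unfolding is_sup_def by auto
  have ps: "p s \<in> B" using p_in sX by simp
  have "join (meet b (p x)) d = b" using diff_props(3)[OF b(1) px] unfolding d_def .
  moreover have "meet b (p x) = p x" using meet_comm[of b "p x"] meet_absorb[of "p x" b] b px by simp
  ultimately have "join (p x) d = b" by simp
  moreover have "le (p x) (p s)" "le (p w) (p s)" using sX bsle_p by auto
  ultimately have bs: "le b (p s)" using join_lub[of "p x" d "p s"] px d ps w by simp
  define y where "y = rs s b"
  have y: "y \<in> X" "p y = b" using rs_ax[OF sX(1) b(1) bs] unfolding y_def by auto
  have "rs y (p x) = rs s (p x)" unfolding y_def using rs_comp[OF sX(1) b(1) px b(2) bs] .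
  also have "\<dots> = x" using bsle_rs[OF sX(2)] by simp
  finally have "bsle x y" unfolding bsle_iff using y b by simp
  thus ?thesis using y by blast
qed

lemma uniq: assumes u: "u \<in> X" and v: "v \<in> X" and cd: "c \<in> B" "d \<in> B"
  and pu: "p u = join c d" and pv: "p v = join c d"
  and ec: "rs u c = rs v c" and ed: "rs u d = rs v d"
  shows "u = v"
proof -
  define e where "e = join c d"
  have e: "e \<in> B" "le c e" "le d e" using cd join_ge1 join_ge2 unfolding e_def by auto
  have cdm: "meet c d \<in> B" "le (meet c d) c" "le (meet c d) d" using cd meet_le1 meet_le2 by auto
  have ce: "le (meet c d) e" using trans[of "meet c d" c e] cdm e cd by simp
  define x where "x = rs u c"
  define y where "y = rs u d"
  define m where "m = rs u (meet c d)"
  have xX: "x \<in> X" "p x = c" using rs_ax[OF u cd(1)] e pu unfolding x_def e_def by auto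
  have yX: "y \<in> X" "p y = d" using rs_ax[OF u cd(2)] e pu unfolding y_def e_def by auto
  have mX: "m \<in> X" "p m = meet c d" using rs_ax[OF u cdm(1)] ce pu unfolding m_def e_def by auto
  have mx: "m = rs x (meet c d)" unfolding m_def x_def using rs_comp[OF u cd(1) cdm(1) cdm(2)] e pu unfolding e_def by simp
  have my: "m = rs y (meet c d)" unfolding m_def y_def using rs_comp[OF u cd(2) cdm(1) cdm(3)] e pu unfolding e_def by simp
  have inf: "is_inf X bsle x y m" unfolding is_inf_def
  proof (intro conjI ballI impI)
    show "m \<in> X" by (rule mX(1))
    show "bsle m x" unfolding bsle_iff using mX xX cdm mx by simp
    show "bsle m y" unfolding bsle_iff using mX yX cdm my by simp
    fix w assume w: "w \<in> X" "bsle w x \<and> bsle w y"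
    have pw: "p w \<in> B" using p_in w by simp
    have "le (p w) (p x)" "le (p w) (p y)" using w bsle_p by auto
    hence "le (p w) (meet c d)" using meet_glb[of c d "p w"] cd pw xX yX by simp
    moreover have "w = rs x (p w)" using w bsle_rs[of w x] by simp
    moreover have "rs x (p w) = rs m (p w)"
      using rs_comp[of x "meet c d" "p w"] xX cdm pw \<open>le (p w) (meet c d)\<close> mx by simp
    ultimately show "bsle w m" unfolding bsle_iff using mX by simp
  qed
  have "is_inf B le (p x) (p y) (p m)" using xX yX mX meet_inf cd by simp
  then obtain s where s: "is_sup X bsle x y s" using join_ex[OF xX(1) yX(1) inf] by blast
  have sX: "s \<in> X" "bsle x s" "bsle y s" using s unfolding is_sup_def by auto
  have ps: "p s \<in> B" using sX p_in by simp
  have "le c (p s)" "le d (p s)" using sX bsle_p xX yX by auto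
  hence les: "le e (p s)" using join_lub cd ps unfolding e_def by simp
  have main: "w = s" if w: "w \<in> X" "p w = e" "rs w c = x" "rs w d = y" for w
  proof -
    have "bsle x w" unfolding bsle_iff using xX w e by simp
    moreover have "bsle y w" unfolding bsle_iff using yX w e by simp
    ultimately have "bsle s w" using s w unfolding is_sup_def by blast
    hence "le (p s) e" "s = rs w (p s)" using bsle_p bsle_rs w by auto
    hence "p s = e" using antisym les ps e by simp
    thus "w = s" using \<open>s = rs w (p s)\<close> rs_id[of w] w by simp
  qed
  have "u = s" using main[of u] u pu unfolding x_def y_def e_def by simp
  moreover have "v = s" using main[of v] v pv ec ed unfolding x_def y_def e_def by simp
  ultimately show ?thesis by simp
qed

end


context bset begin

abbreviation XPF where "XPF \<equiv> proper_filter X bsle"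
abbreviation XUF where "XUF \<equiv> ultrafilters X bsle"
abbreviation L where "L \<equiv> L_set X B le p res"

lemma dual_X_eq: "dual_X X B le p res = XUF" unfolding dual_X_def by simp
lemma L_def2: "L a = {G \<in> XUF. a \<in> G}" unfolding L_set_def dual_X_def by simp

lemma xpf_sub: "XPF G \<Longrightarrow> G \<subseteq> X" unfolding proper_filter_def by blast
lemma xpf_ne: "XPF G \<Longrightarrow> G \<noteq> {}" unfolding proper_filter_def by blast
lemma xpf_up: "XPF G \<Longrightarrow> x \<in> G \<Longrightarrow> y \<in> X \<Longrightarrow> bsle x y \<Longrightarrow> y \<in> G" unfolding proper_filter_def by blast
lemma xpf_dir: "XPF G \<Longrightarrow> x \<in> G \<Longrightarrow> y \<in> G \<Longrightarrow> \<exists>z\<in>G. bsle z x \<and> bsle z y" unfolding proper_filter_def by blast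
lemma xpf_z0: assumes "XPF G" shows "z0 \<notin> G"
proof
  assume "z0 \<in> G"
  hence "X \<subseteq> G" using xpf_up[OF assms] z0_le by blast
  thus False using assms unfolding proper_filter_def by blast
qed
lemma xpf_intro:
  assumes "G \<subseteq> X" "G \<noteq> {}" "z0 \<notin> G" "\<And>x y. x \<in> G \<Longrightarrow> y \<in> X \<Longrightarrow> bsle x y \<Longrightarrow> y \<in> G"
    "\<And>x y. x \<in> G \<Longrightarrow> y \<in> G \<Longrightarrow> \<exists>z\<in>G. bsle z x \<and> bsle z y"
  shows "XPF G"
  unfolding proper_filter_def using assms z0_in by blast
lemma xuf_pf: "G \<in> XUF \<Longrightarrow> XPF G" unfolding ultrafilters_def by blast
lemma xuf_max: "G \<in> XUF \<Longrightarrow> XPF G' \<Longrightarrow> G \<subseteq> G' \<Longrightarrow> G' = G" unfolding ultrafilters_def by blast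

lemma xpf_image: assumes G: "XPF G" shows "PF (p ` G)"
proof (rule pf_intro)
  show "p ` G \<subseteq> B" using xpf_sub[OF G] p_in by blast
  show "p ` G \<noteq> {}" using xpf_ne[OF G] by blast
  show "zero \<notin> p ` G"
  proof
    assume "zero \<in> p ` G"
    then obtain x where "zero = p x" "x \<in> G" by (rule imageE)
    hence "x = z0" using z0_uniq[of x] xpf_sub[OF G] by auto
    thus False using xpf_z0[OF G] \<open>x \<in> G\<close> by blast
  qed
  show "y \<in> p ` G" if hh: "x \<in> p ` G" "y \<in> B" "le x y" for x y
  proof -
    obtain g where g: "g \<in> G" "x = p g" using hh by blast
    have gX: "g \<in> X" using g xpf_sub[OF G] by blast
    have "le (p g) y" using hh(3) g(2) by simp
    then obtain y' where "y' \<in> X" "p y' = y" "bsle g y'" using ext[OF gX hh(2)] by blast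
    thus ?thesis using xpf_up[OF G g(1)] by blast
  qed
  show "\<exists>z\<in>p ` G. le z x \<and> le z y" if hh: "x \<in> p ` G" "y \<in> p ` G" for x y
  proof -
    obtain g g' where g: "g \<in> G" "x = p g" "g' \<in> G" "y = p g'" using hh by blast
    obtain h where "h \<in> G" "bsle h g" "bsle h g'" using xpf_dir[OF G g(1) g(3)] by blast
    thus ?thesis using g bsle_p by blast
  qed
qed

definition germs where
  "germs S F = {x\<in>X. \<exists>g\<in>S. \<exists>c\<in>F. le c (p g) \<and> le c (p x) \<and> rs x c = rs g c}"

lemma germs_I: "x \<in> X \<Longrightarrow> g \<in> S \<Longrightarrow> c \<in> F \<Longrightarrow> le c (p g) \<Longrightarrow> le c (p x) \<Longrightarrow> rs x c = rs g c \<Longrightarrow> x \<in> germs S F"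
  unfolding germs_def by blast

lemma germs_E: "x \<in> germs S F \<Longrightarrow> (\<And>g c. x \<in> X \<Longrightarrow> g \<in> S \<Longrightarrow> c \<in> F \<Longrightarrow> le c (p g) \<Longrightarrow> le c (p x) \<Longrightarrow> rs x c = rs g c \<Longrightarrow> P) \<Longrightarrow> P"
  unfolding germs_def by blast

lemma rs_self: "x \<in> X \<Longrightarrow> c \<in> B \<Longrightarrow> le c (p x) \<Longrightarrow> rs (rs x c) c = rs x c"
  using rs_id[of "rs x c"] rs_ax[of x c] by simp

lemma germs_pf:
  assumes S: "S \<subseteq> X" "S \<noteq> {}" and F: "PF F" "p ` S \<subseteq> F"
    and dirS: "\<And>g g'. g \<in> S \<Longrightarrow> g' \<in> S \<Longrightarrow> \<exists>h\<in>S. bsle h g \<and> bsle h g'"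
  shows "XPF (germs S F)" "S \<subseteq> germs S F"
proof -
  have FB: "F \<subseteq> B" using pf_sub[OF F(1)] .
  show sub: "S \<subseteq> germs S F"
  proof
    fix g assume g: "g \<in> S"
    have "g \<in> X" "p g \<in> F" "p g \<in> B" using g S F p_in by auto
    thus "g \<in> germs S F" using germs_I[of g g S "p g" F] g refl by simp
  qed
  show "XPF (germs S F)"
  proof (rule xpf_intro)
    show "germs S F \<subseteq> X" unfolding germs_def by blast
    show "germs S F \<noteq> {}" using sub S by blast
    show "z0 \<notin> germs S F"
    proof
      assume "z0 \<in> germs S F"
      then obtain c where c: "c \<in> F" "le c (p z0)" by (rule germs_E) blast
      hence "c = zero" using le_zero FB p_z0 by auto
      thus False using c pf_zero[OF F(1)] by simp
    qed
    show "y \<in> germs S F" if hh: "x \<in> germs S F" "y \<in> X" "bsle x y" for x y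
    proof -
      obtain g c where gc: "x \<in> X" "g \<in> S" "c \<in> F" "le c (p g)" "le c (p x)" "rs x c = rs g c"
        using hh(1) by (rule germs_E) blast
      have cB: "c \<in> B" using gc FB by blast
      have "le (p x) (p y)" using bsle_p hh by blast
      hence "le c (p y)" using trans[of c "p x" "p y"] cB p_in gc hh by simp
      moreover have "rs y c = rs x c" using rs_below[OF hh(2) gc(1) hh(3) cB gc(5)] .
      ultimately show ?thesis using germs_I[OF hh(2) gc(2) gc(3) gc(4)] gc by simp
    qed
    show "\<exists>z\<in>germs S F. bsle z x \<and> bsle z y" if hh: "x \<in> germs S F" "y \<in> germs S F" for x y
    proof -
      obtain g c where gc: "x \<in> X" "g \<in> S" "c \<in> F" "le c (p g)" "le c (p x)" "rs x c = rs g c"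
        using hh(1) by (rule germs_E) blast
      obtain g' c' where gc': "y \<in> X" "g' \<in> S" "c' \<in> F" "le c' (p g')" "le c' (p y)" "rs y c' = rs g' c'"
        using hh(2) by (rule germs_E) blast
      obtain h where h: "h \<in> S" "bsle h g" "bsle h g'" using dirS gc(2) gc'(2) by blast
      have X: "g \<in> X" "g' \<in> X" "h \<in> X" using S gc gc' h by auto
      have PB: "p x \<in> B" "p y \<in> B" "p g \<in> B" "p g' \<in> B" "p h \<in> B" using X gc gc' p_in by auto
      have cB: "c \<in> B" "c' \<in> B" using gc gc' FB by auto
      have phF: "p h \<in> F" using F h by blast
      define c'' where "c'' = meet (meet c c') (p h)"
      have c''F: "c'' \<in> F" using pf_meet[OF F(1)] gc gc' phF unfolding c''_def by simp
      have c''B: "c'' \<in> B" using cB PB unfolding c''_def by simp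
      have le1: "le c'' c" using trans[of c'' "meet c c'" c] meet_le1 cB PB unfolding c''_def by simp
      have le2: "le c'' c'" using trans[of c'' "meet c c'" c'] meet_le1 meet_le2 cB PB unfolding c''_def by simp
      have le3: "le c'' (p h)" using meet_le2 cB PB unfolding c''_def by simp
      have lx: "le c'' (p x)" using trans[of c'' c "p x"] le1 c''B cB PB gc by simp
      have ly: "le c'' (p y)" using trans[of c'' c' "p y"] le2 c''B cB PB gc' by simp
      have lg: "le c'' (p g)" using trans[of c'' c "p g"] le1 c''B cB PB gc by simp
      have lg': "le c'' (p g')" using trans[of c'' c' "p g'"] le2 c''B cB PB gc' by simp
      have ex: "rs x c'' = rs h c''"
      proof -
        have "rs x c'' = rs (rs x c) c''" using rs_comp[OF gc(1) cB(1) c''B le1 gc(5)] by simp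
        also have "\<dots> = rs (rs g c) c''" using gc by simp
        also have "\<dots> = rs g c''" using rs_comp[OF X(1) cB(1) c''B le1 gc(4)] .
        also have "\<dots> = rs h c''" using rs_below[OF X(1) X(3) h(2) c''B le3] .
        finally show ?thesis .
      qed
      have ey: "rs y c'' = rs h c''"
      proof -
        have "rs y c'' = rs (rs y c') c''" using rs_comp[OF gc'(1) cB(2) c''B le2 gc'(5)] by simp
        also have "\<dots> = rs (rs g' c') c''" using gc' by simp
        also have "\<dots> = rs g' c''" using rs_comp[OF X(2) cB(2) c''B le2 gc'(4)] .
        also have "\<dots> = rs h c''" using rs_below[OF X(2) X(3) h(3) c''B le3] .
        finally show ?thesis .
      qed
      define w where "w = rs x c''"
      have w: "w \<in> X" "p w = c''" using rs_ax[OF gc(1) c''B lx] unfolding w_def by auto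
      have wx: "bsle w x" using rs_le[OF gc(1) c''B lx] unfolding w_def .
      have wy: "bsle w y" unfolding bsle_iff using w ly ex ey unfolding w_def by simp
      have "rs w c'' = w" using rs_id[of w] w by simp
      hence "w \<in> germs S F" using germs_I[OF w(1) h(1) c''F le3] w refl c''B ex unfolding w_def by simp
      thus ?thesis using wx wy by blast
    qed
  qed
qed

lemma germ_pf: assumes F: "PF F" and a: "a \<in> X" "p a \<in> F" shows "XPF (germs {a} F)" "a \<in> germs {a} F"
proof -
  have "\<exists>h\<in>{a}. bsle h g \<and> bsle h g'" if "g \<in> {a}" "g' \<in> {a}" for g g'
    using that bsle_refl a by blast
  hence "XPF (germs {a} F) \<and> {a} \<subseteq> germs {a} F" using germs_pf[of "{a}" F] F a by blast
  thus "XPF (germs {a} F)" "a \<in> germs {a} F" by auto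
qed

lemma img_sup: assumes G: "XPF G" and F: "PF F" and a: "a \<in> X" "p a \<in> F" and sub: "germs {a} F \<subseteq> G"
  shows "F \<subseteq> p ` G"
proof
  fix f assume f: "f \<in> F"
  have FB: "F \<subseteq> B" using pf_sub F by blast
  have pa: "p a \<in> B" using p_in a by simp
  define c where "c = meet f (p a)"
  have c: "c \<in> F" "c \<in> B" "le c (p a)" "le c f" using pf_meet[OF F f a(2)] FB f pa meet_le1 meet_le2 unfolding c_def by auto
  have "rs a c \<in> germs {a} F"
    using germs_I[of "rs a c" a "{a}" c F] rs_ax[OF a(1) c(2) c(3)] rs_self[OF a(1) c(2) c(3)] c refl by simp
  hence "c \<in> p ` G" using sub rs_ax[OF a(1) c(2) c(3)] by force
  thus "f \<in> p ` G" using pf_up[OF xpf_image[OF G]] c f FB by blast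
qed

lemma germ_uf: assumes F: "F \<in> UF" and a: "a \<in> X" "p a \<in> F" shows "germs {a} F \<in> XUF"
proof -
  have PF: "PF F" using uf_pf F by blast
  note g = germ_pf[OF PF a]
  have "G = germs {a} F" if G: "XPF G" "germs {a} F \<subseteq> G" for G
  proof
    show "germs {a} F \<subseteq> G" by (rule G(2))
    have "F \<subseteq> p ` G" using img_sup[OF G(1) PF a G(2)] .
    hence pG: "p ` G = F" using uf_max[OF F xpf_image[OF G(1)]] by blast
    show "G \<subseteq> germs {a} F"
    proof
      fix x assume x: "x \<in> G"
      have aG: "a \<in> G" using g G by blast
      obtain w where w: "w \<in> G" "bsle w x" "bsle w a" using xpf_dir[OF G(1) x aG] by blast
      have X: "x \<in> X" "w \<in> X" using x w xpf_sub[OF G(1)] by auto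
      have "p w \<in> F" using pG w by blast
      moreover have "rs x (p w) = rs a (p w)" using bsle_rs w by metis
      ultimately show "x \<in> germs {a} F"
        using germs_I[OF X(1), of a "{a}" "p w" F] bsle_p[OF w(2)] bsle_p[OF w(3)] by simp
    qed
  qed
  thus ?thesis unfolding ultrafilters_def using g by blast
qed

lemma germ_img: assumes F: "F \<in> UF" and a: "a \<in> X" "p a \<in> F" shows "p ` germs {a} F = F"
proof
  have PF: "PF F" using uf_pf F by blast
  show "F \<subseteq> p ` germs {a} F" using img_sup[OF germ_pf(1)[OF PF a] PF a] by blast
  show "p ` germs {a} F \<subseteq> F"
  proof
    fix y assume "y \<in> p ` germs {a} F"
    then obtain x where x: "x \<in> germs {a} F" "y = p x" by blast
    obtain c where gc: "x \<in> X" "c \<in> F" "le c (p x)" using x(1) by (rule germs_E) blast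
    thus "y \<in> F" using pf_up[OF PF gc(2)] p_in x by simp
  qed
qed

lemma xuf_img: assumes G: "G \<in> XUF" shows "p ` G \<in> UF"
proof -
  have XG: "XPF G" using xuf_pf G by blast
  have PG: "PF (p ` G)" using xpf_image XG by blast
  have "F' = p ` G" if F': "PF F'" "p ` G \<subseteq> F'" for F'
  proof
    show "p ` G \<subseteq> F'" by (rule F'(2))
    have dirG: "\<exists>h\<in>G. bsle h g \<and> bsle h g'" if "g \<in> G" "g' \<in> G" for g g'
      using xpf_dir[OF XG that] by blast
    note gp = germs_pf[OF xpf_sub[OF XG] xpf_ne[OF XG] F' dirG]
    have eq: "germs G F' = G" using xuf_max[OF G gp(1) gp(2)] .
    show "F' \<subseteq> p ` G"
    proof
      fix f assume f: "f \<in> F'"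
      have FB: "F' \<subseteq> B" using pf_sub F' by blast
      obtain g where g: "g \<in> G" using xpf_ne[OF XG] by blast
      have gX: "g \<in> X" using g xpf_sub[OF XG] by blast
      have pg: "p g \<in> B" "p g \<in> F'" using p_in gX F' g by auto
      define c where "c = meet f (p g)"
      have c: "c \<in> F'" "c \<in> B" "le c (p g)" "le c f" using pf_meet[OF F'(1) f pg(2)] FB f pg meet_le1 meet_le2 unfolding c_def by auto
      have "rs g c \<in> germs G F'"
        using germs_I[of "rs g c" g G c F'] rs_ax[OF gX c(2) c(3)] rs_self[OF gX c(2) c(3)] c g refl by simp
      hence "c \<in> p ` G" using eq rs_ax[OF gX c(2) c(3)] by force
      thus "f \<in> p ` G" using pf_up[OF PG] c f FB by blast
    qed
  qed
  thus ?thesis unfolding ultrafilters_def using PG by blast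
qed

lemma xuf_germ: assumes G: "G \<in> XUF" and a: "a \<in> G" shows "G = germs {a} (p ` G)"
proof
  have XG: "XPF G" using xuf_pf G by blast
  have aX: "a \<in> X" using a xpf_sub[OF XG] by blast
  show "G \<subseteq> germs {a} (p ` G)"
  proof
    fix x assume x: "x \<in> G"
    obtain w where w: "w \<in> G" "bsle w x" "bsle w a" using xpf_dir[OF XG x a] by blast
    have X: "x \<in> X" "w \<in> X" using x w xpf_sub[OF XG] by auto
    have "rs x (p w) = rs a (p w)" using bsle_rs w by metis
    thus "x \<in> germs {a} (p ` G)"
      using germs_I[OF X(1), of a "{a}" "p w" "p ` G"] bsle_p[OF w(2)] bsle_p[OF w(3)] w by simp
  qed
  show "germs {a} (p ` G) \<subseteq> G"
  proof
    fix x assume "x \<in> germs {a} (p ` G)"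
    then obtain c where gc: "x \<in> X" "c \<in> p ` G" "le c (p a)" "le c (p x)" "rs x c = rs a c"
      by (rule germs_E) blast
    obtain g where g: "g \<in> G" "c = p g" using gc by blast
    obtain h where h: "h \<in> G" "bsle h a" "bsle h g" using xpf_dir[OF XG a g(1)] by blast
    have X: "g \<in> X" "h \<in> X" using g h xpf_sub[OF XG] by auto
    have cB: "c \<in> B" using g X p_in by simp
    have ph: "p h \<in> B" "le (p h) c" using p_in X bsle_p h g by auto
    have "rs x (p h) = rs (rs x c) (p h)" using rs_comp[OF gc(1) cB ph(1) ph(2) gc(4)] by simp
    also have "\<dots> = rs (rs a c) (p h)" using gc by simp
    also have "\<dots> = rs a (p h)" using rs_comp[OF aX cB ph(1) ph(2) gc(3)] .
    also have "\<dots> = h" using bsle_rs[OF h(2)] by simp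
    finally have "bsle h x" unfolding bsle_iff
      using trans[of "p h" c "p x"] ph cB p_in gc by simp
    thus "x \<in> G" using xpf_up[OF XG h(1) gc(1)] by blast
  qed
qed

end


context bset begin

abbreviation TX where "TX \<equiv> dual_X_top X B le p res"
lemma TX_def2: "TX = topology_generated_by (L ` X)" unfolding dual_X_top_def by simp

lemma L_germ: "a \<in> X \<Longrightarrow> F \<in> UF \<Longrightarrow> p a \<in> F \<Longrightarrow> germs {a} F \<in> L a"
  unfolding L_def2 using germ_uf germ_pf uf_pf by blast

lemma L_elem: assumes "G \<in> L a" shows "G \<in> XUF" "a \<in> G" "G = germs {a} (p ` G)" "p ` G \<in> M (p a)"
proof -
  show G: "G \<in> XUF" "a \<in> G" using assms unfolding L_def2 by auto
  show "G = germs {a} (p ` G)" using xuf_germ G by blast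
  show "p ` G \<in> M (p a)" unfolding M_def2 using xuf_img G by blast
qed

lemma L_sub: "a \<in> X \<Longrightarrow> a \<in> G \<Longrightarrow> G \<in> XUF \<Longrightarrow> G \<in> L a" unfolding L_def2 by blast

lemma r_L: assumes a: "a \<in> X" shows "(\<lambda>G. p ` G) ` L a = M (p a)"
proof
  show "(\<lambda>G. p ` G) ` L a \<subseteq> M (p a)" using L_elem(4) by blast
  show "M (p a) \<subseteq> (\<lambda>G. p ` G) ` L a"
  proof
    fix F assume F: "F \<in> M (p a)"
    hence F': "F \<in> UF" "p a \<in> F" unfolding M_def2 by auto
    have "p ` germs {a} F = F" using germ_img[OF F'(1) a F'(2)] .
    moreover have "germs {a} F \<in> L a" using L_germ a F' by blast
    ultimately show "F \<in> (\<lambda>G. p ` G) ` L a" using rev_image_eqI[of "germs {a} F" "L a" F "\<lambda>G. p ` G"] by simp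
  qed
qed

lemma inj_L: "inj_on (\<lambda>G. p ` G) (L a)"
proof (rule inj_onI)
  fix G G' assume "G \<in> L a" "G' \<in> L a" "p ` G = p ` G'"
  thus "G = G'" using L_elem(3)[of G a] L_elem(3)[of G' a] by metis
qed

lemma L_mono: assumes "a \<in> X" "bsle w a" shows "L w \<subseteq> L a"
proof
  fix G assume "G \<in> L w"
  hence "G \<in> XUF" "w \<in> G" using L_elem by auto
  hence "a \<in> G" using xpf_up[OF xuf_pf] assms by blast
  thus "G \<in> L a" using L_sub assms \<open>G \<in> XUF\<close> by blast
qed

lemma L_z0: "L z0 = {}" unfolding L_def2 using xuf_pf xpf_z0 by blast

lemma xuf_L: assumes "G \<in> XUF" shows "\<exists>a\<in>X. G \<in> L a"
proof -
  obtain a where "a \<in> G" using xpf_ne xuf_pf assms by blast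
  moreover have "a \<in> X" using calculation xpf_sub xuf_pf assms by blast
  ultimately show ?thesis using L_sub assms by blast
qed

lemma topspace_TX: "topspace TX = XUF"
proof -
  have "\<Union>(L ` X) = XUF" using xuf_L unfolding L_def2 by blast
  thus ?thesis unfolding TX_def2 by simp
qed

lemma L_loc: "\<forall>s1\<in>L ` X. \<forall>s2\<in>L ` X. \<forall>G\<in>s1 \<inter> s2. \<exists>s3\<in>L ` X. G \<in> s3 \<and> s3 \<subseteq> s1 \<inter> s2"
proof (intro ballI)
  fix s1 s2 G assume s: "s1 \<in> L ` X" "s2 \<in> L ` X" "G \<in> s1 \<inter> s2"
  then obtain a b where ab: "a \<in> X" "b \<in> X" "s1 = L a" "s2 = L b" by blast
  have G: "G \<in> XUF" "a \<in> G" "b \<in> G" using s ab L_elem by auto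
  obtain w where w: "w \<in> G" "bsle w a" "bsle w b" using xpf_dir[OF xuf_pf[OF G(1)] G(2) G(3)] by blast
  have wX: "w \<in> X" using w xpf_sub xuf_pf G by blast
  have "G \<in> L w" using L_sub wX w G by blast
  moreover have "L w \<subseteq> s1 \<inter> s2" using L_mono ab w by blast
  ultimately show "\<exists>s3\<in>L ` X. G \<in> s3 \<and> s3 \<subseteq> s1 \<inter> s2" using wX by blast
qed

lemma L_res: assumes a: "a \<in> X" and f: "f \<in> B" "le f (p a)"
  shows "{G \<in> L a. f \<in> p ` G} = L (rs a f)"
proof
  have r: "rs a f \<in> X" "p (rs a f) = f" using rs_ax a f by auto
  show "{G \<in> L a. f \<in> p ` G} \<subseteq> L (rs a f)"
  proof
    fix G assume G: "G \<in> {G \<in> L a. f \<in> p ` G}"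
    hence G': "G \<in> L a" "f \<in> p ` G" by auto
    have "rs a f \<in> germs {a} (p ` G)"
      using germs_I[of "rs a f" a "{a}" f "p ` G"] r G' f rs_self[OF a f] refl by simp
    hence "rs a f \<in> G" using L_elem(3)[OF G'(1)] by simp
    thus "G \<in> L (rs a f)" using L_sub r L_elem(1)[OF G'(1)] by blast
  qed
  show "L (rs a f) \<subseteq> {G \<in> L a. f \<in> p ` G}"
  proof
    fix G assume G: "G \<in> L (rs a f)"
    have "G \<in> L a" using L_mono[OF a rs_le[OF a f]] G by blast
    moreover have "f \<in> p ` G" using L_elem(2)[OF G] r rev_image_eqI[of "rs a f" G f p] by simp
    ultimately show "G \<in> {G \<in> L a. f \<in> p ` G}" by blast
  qed
qed

lemma agree:
  assumes a: "a \<in> X" and b: "b \<in> X" and e: "e \<in> B" "le e (p a)" "le e (p b)"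
    and H: "\<And>F. F \<in> M e \<Longrightarrow> \<exists>c\<in>F. le c (p a) \<and> le c (p b) \<and> rs a c = rs b c"
  shows "rs a e = rs b e"
proof -
  have pa: "p a \<in> B" "p b \<in> B" using a b p_in by auto
  define E where "E = {c\<in>B. le c e \<and> rs a c = rs b c}"
  have EB: "E \<subseteq> B" unfolding E_def by blast
  have cov: "M e \<subseteq> \<Union>(M ` E)"
  proof
    fix F assume F: "F \<in> M e"
    then obtain c where c: "c \<in> F" "le c (p a)" "le c (p b)" "rs a c = rs b c" using H by blast
    have F': "F \<in> UF" "e \<in> F" using F unfolding M_def2 by auto
    have cB: "c \<in> B" using c uf_sub F' by blast
    define c' where "c' = meet c e"
    have c': "c' \<in> B" "le c' c" "le c' e" "c' \<in> F" using cB e meet_le1 meet_le2 pf_meet[OF uf_pf[OF F'(1)] c(1) F'(2)]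
      unfolding c'_def by auto
    have "rs a c' = rs (rs a c) c'" using rs_comp[OF a cB c'(1) c'(2) c(2)] by simp
    also have "\<dots> = rs (rs b c) c'" using c by simp
    also have "\<dots> = rs b c'" using rs_comp[OF b cB c'(1) c'(2) c(3)] .
    finally have "c' \<in> E" unfolding E_def using c' by blast
    moreover have "F \<in> M c'" unfolding M_def2 using F' c' by blast
    ultimately show "F \<in> \<Union>(M ` E)" by blast
  qed
  have E0: "zero \<in> E"
  proof -
    have "rs a zero = z0" using z0_uniq rs_ax[OF a zero_in zero_le[OF pa(1)]] by simp
    moreover have "rs b zero = z0" using z0_uniq rs_ax[OF b zero_in zero_le[OF pa(2)]] by simp
    ultimately show ?thesis unfolding E_def using zero_le e by simp
  qed
  have Ej: "join y c \<in> E" if yc: "y \<in> E" "c \<in> E" for y c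
  proof -
    have yc': "y \<in> B" "c \<in> B" "le y e" "le c e" "rs a y = rs b y" "rs a c = rs b c" using yc unfolding E_def by auto
    define j where "j = join y c"
    have j: "j \<in> B" "le j e" "le y j" "le c j" using join_lub join_ge1 join_ge2 yc' e unfolding j_def by auto
    have ja: "le j (p a)" "le j (p b)" using trans[of j e "p a"] trans[of j e "p b"] j e pa by auto
    have ua: "rs a j \<in> X" "p (rs a j) = j" using rs_ax[OF a j(1) ja(1)] by auto
    have ub: "rs b j \<in> X" "p (rs b j) = j" using rs_ax[OF b j(1) ja(2)] by auto
    have 1: "rs (rs a j) y = rs (rs b j) y"
      using rs_comp[OF a j(1) yc'(1) j(3) ja(1)] rs_comp[OF b j(1) yc'(1) j(3) ja(2)] yc' by simp
    have 2: "rs (rs a j) c = rs (rs b j) c"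
      using rs_comp[OF a j(1) yc'(2) j(4) ja(1)] rs_comp[OF b j(1) yc'(2) j(4) ja(2)] yc' by simp
    have "rs a j = rs b j" using uniq[OF ua(1) ub(1) yc'(1) yc'(2)] ua ub 1 2 unfolding j_def by simp
    thus ?thesis unfolding E_def j_def using j unfolding j_def by simp
  qed
  have fin: "finite T \<Longrightarrow> T \<subseteq> E \<Longrightarrow> \<exists>y\<in>E. \<Union>(M ` T) \<subseteq> M y" for T
  proof (induction T rule: finite_induct)
    case empty thus ?case using E0 by blast
  next
    case (insert c T)
    then obtain y where y: "y \<in> E" "\<Union>(M ` T) \<subseteq> M y" by blast
    have cE: "c \<in> E" using insert by blast
    have "M (join y c) = M y \<union> M c" using M_join y cE EB by blast
    hence "\<Union>(M ` insert c T) \<subseteq> M (join y c)" using y by auto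
    thus ?case using Ej[OF y(1) cE] by blast
  qed
  obtain T where T: "T \<subseteq> E" "finite T" "M e \<subseteq> \<Union>(M ` T)" using finite_cover[OF EB e(1) cov] by blast
  obtain y where y: "y \<in> E" "\<Union>(M ` T) \<subseteq> M y" using fin[OF T(2) T(1)] by blast
  have yB: "y \<in> B" "le y e" using y unfolding E_def by auto
  have "le e y" using M_le_iff[OF e(1) yB(1)] T y by blast
  hence "y = e" using antisym yB e by blast
  thus ?thesis using y unfolding E_def by blast
qed

lemma L_inj: assumes a: "a \<in> X" and b: "b \<in> X" and eq: "L a = L b" shows "a = b"
proof -
  have "M (p a) = M (p b)" using r_L a b eq by metis
  hence pe: "p a = p b" using M_inj p_in a b by blast
  have pa: "p a \<in> B" using p_in a by simp
  have "rs a (p a) = rs b (p a)"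
  proof (rule agree[OF a b pa refl[OF pa]])
    show "le (p a) (p b)" using pe refl pa by simp
    fix F assume F: "F \<in> M (p a)"
    hence F': "F \<in> UF" "p a \<in> F" unfolding M_def2 by auto
    have "germs {a} F \<in> L b" using L_germ[OF a F'] eq by simp
    hence "b \<in> germs {a} F" using L_elem(2) by blast
    then obtain c where c: "c \<in> F" "le c (p a)" "le c (p b)" "rs b c = rs a c"
      by (rule germs_E) blast
    thus "\<exists>c\<in>F. le c (p a) \<and> le c (p b) \<and> rs a c = rs b c" by metis
  qed
  thus ?thesis using rs_id a b pe by metis
qed

lemma L_compact_fin: assumes a: "a \<in> X" and W: "W \<subseteq> X" and cov: "L a \<subseteq> \<Union>(L ` W)"
  shows "\<exists>T. T \<subseteq> W \<and> finite T \<and> L a \<subseteq> \<Union>(L ` T)"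
proof -
  define S where "S = {c\<in>B. le c (p a) \<and> (\<exists>w\<in>W. le c (p w) \<and> rs w c = rs a c)}"
  have SB: "S \<subseteq> B" unfolding S_def by blast
  have pa: "p a \<in> B" using p_in a by simp
  have covM: "M (p a) \<subseteq> \<Union>(M ` S)"
  proof
    fix F assume F: "F \<in> M (p a)"
    hence F': "F \<in> UF" "p a \<in> F" unfolding M_def2 by auto
    have "germs {a} F \<in> L a" using L_germ[OF a F'] .
    then obtain w where w: "w \<in> W" "germs {a} F \<in> L w" using cov by blast
    hence "w \<in> germs {a} F" using L_elem(2) by blast
    then obtain c where c: "w \<in> X" "c \<in> F" "le c (p a)" "le c (p w)" "rs w c = rs a c"
      by (rule germs_E) blast
    have cB: "c \<in> B" using c uf_sub F' by blast
    have "c \<in> S" unfolding S_def using cB c w by blast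
    moreover have "F \<in> M c" unfolding M_def2 using F' c by blast
    ultimately show "F \<in> \<Union>(M ` S)" by blast
  qed
  obtain T0 where T0: "T0 \<subseteq> S" "finite T0" "M (p a) \<subseteq> \<Union>(M ` T0)" using finite_cover[OF SB pa covM] by blast
  have "\<forall>c\<in>T0. \<exists>w. w \<in> W \<and> le c (p w) \<and> rs w c = rs a c" using T0(1) unfolding S_def by blast
  hence "\<exists>wf. \<forall>c\<in>T0. wf c \<in> W \<and> le c (p (wf c)) \<and> rs (wf c) c = rs a c" by (rule bchoice)
  then obtain wf where wf: "\<forall>c\<in>T0. wf c \<in> W \<and> le c (p (wf c)) \<and> rs (wf c) c = rs a c" by blast
  have "L a \<subseteq> \<Union>(L ` (wf ` T0))"
  proof
    fix G assume G: "G \<in> L a"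
    have "p ` G \<in> M (p a)" using L_elem(4)[OF G] .
    then obtain c where c: "c \<in> T0" "c \<in> p ` G" using T0 unfolding M_def2 by blast
    have cS: "c \<in> B" "le c (p a)" using c T0 unfolding S_def by auto
    have w: "wf c \<in> W" "le c (p (wf c))" "rs (wf c) c = rs a c" using wf c by auto
    have wX: "wf c \<in> X" using w W by blast
    have "wf c \<in> germs {a} (p ` G)" using germs_I[OF wX, of a "{a}" c "p ` G"] c cS w by simp
    hence "wf c \<in> G" using L_elem(3)[OF G] by simp
    hence "G \<in> L (wf c)" using L_sub wX L_elem(1)[OF G] by blast
    thus "G \<in> \<Union>(L ` (wf ` T0))" using c by blast
  qed
  moreover have "wf ` T0 \<subseteq> W" using wf by blast
  ultimately show ?thesis using T0(2) by blast
qed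

lemma L_open: "a \<in> X \<Longrightarrow> openin TX (L a)"
  unfolding TX_def2 by (rule topology_generated_by_Basis) blast

lemma L_compact: assumes a: "a \<in> X" shows "compactin TX (L a)"
  unfolding TX_def2
proof (rule gen_compact[OF L_loc])
  show "L a \<subseteq> \<Union>(L ` X)" using a by blast
  fix S' assume S': "S' \<subseteq> L ` X" "L a \<subseteq> \<Union>S'"
  define W where "W = {w\<in>X. L w \<in> S'}"
  have "S' = L ` W" using S' unfolding W_def by blast
  hence "L a \<subseteq> \<Union>(L ` W)" using S' by simp
  then obtain T where T: "T \<subseteq> W" "finite T" "L a \<subseteq> \<Union>(L ` T)"
    using L_compact_fin[OF a, of W] unfolding W_def by blast
  show "\<exists>T. T \<subseteq> S' \<and> finite T \<and> L a \<subseteq> \<Union>T"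
    using T unfolding W_def by (intro exI[of _ "L ` T"]) auto
qed

end


context bset begin

abbreviation r where "r \<equiv> (\<lambda>G. p ` G)"

lemma glue2: assumes a: "a \<in> X" and b: "b \<in> X" and C: "L a \<subseteq> C" "L b \<subseteq> C" "inj_on r C"
  shows "\<exists>s\<in>X. L s = L a \<union> L b"
proof -
  have pa: "p a \<in> B" "p b \<in> B" using a b p_in by auto
  define e where "e = meet (p a) (p b)"
  have e: "e \<in> B" "le e (p a)" "le e (p b)" using pa meet_le1 meet_le2 unfolding e_def by auto
  have "rs a e = rs b e"
  proof (rule agree[OF a b e])
    fix F assume F: "F \<in> M e"
    hence F': "F \<in> UF" "e \<in> F" unfolding M_def2 by auto
    have inF: "p a \<in> F" "p b \<in> F" using pf_up[OF uf_pf[OF F'(1)] F'(2)] e pa by auto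
    have ga: "germs {a} F \<in> C" using L_germ[OF a F'(1) inF(1)] C by blast
    have gb: "germs {b} F \<in> C" using L_germ[OF b F'(1) inF(2)] C by blast
    have "r (germs {a} F) = r (germs {b} F)" using germ_img F' inF a b by simp
    hence eq: "germs {a} F = germs {b} F" using inj_onD[OF C(3)] ga gb by blast
    have "b \<in> germs {b} F" using germ_pf[OF uf_pf[OF F'(1)] b inF(2)] by blast
    hence "b \<in> germs {a} F" using eq by simp
    then obtain c where c: "c \<in> F" "le c (p a)" "le c (p b)" "rs b c = rs a c"
      by (rule germs_E) blast
    thus "\<exists>c\<in>F. le c (p a) \<and> le c (p b) \<and> rs a c = rs b c" by metis
  qed
  define m where "m = rs a e"
  have m: "m \<in> X" "p m = e" using rs_ax[OF a e(1) e(2)] unfolding m_def by auto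
  have mb: "m = rs b e" using \<open>rs a e = rs b e\<close> unfolding m_def by simp
  have inf: "is_inf X bsle a b m" unfolding is_inf_def
  proof (intro conjI ballI impI)
    show "m \<in> X" by (rule m(1))
    show "bsle m a" using rs_le[OF a e(1) e(2)] unfolding m_def .
    show "bsle m b" using rs_le[OF b e(1) e(3)] mb by simp
    fix w assume w: "w \<in> X" "bsle w a \<and> bsle w b"
    have pw: "p w \<in> B" using p_in w by simp
    have "le (p w) (p a)" "le (p w) (p b)" using w bsle_p by auto
    hence le: "le (p w) e" using meet_glb pa pw unfolding e_def by simp
    have "w = rs a (p w)" using w bsle_rs[of w a] by simp
    also have "\<dots> = rs m (p w)" using rs_comp[OF a e(1) pw le e(2)] unfolding m_def by simp
    finally show "bsle w m" unfolding bsle_iff using le m by simp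
  qed
  have "is_inf B le (p a) (p b) (p m)" using m meet_inf pa unfolding e_def by simp
  then obtain s where s: "is_sup X bsle a b s" using join_ex[OF a b inf] by blast
  have sX: "s \<in> X" "bsle a s" "bsle b s" using s unfolding is_sup_def by auto
  have ps: "p s \<in> B" using p_in sX by simp
  define j where "j = join (p a) (p b)"
  have j: "j \<in> B" "le (p a) j" "le (p b) j" using pa join_ge1 join_ge2 unfolding j_def by auto
  have "le (p a) (p s)" "le (p b) (p s)" using sX bsle_p by auto
  hence js: "le j (p s)" using join_lub pa ps unfolding j_def by simp
  define s' where "s' = rs s j"
  have s': "s' \<in> X" "p s' = j" using rs_ax[OF sX(1) j(1) js] unfolding s'_def by auto
  have "rs s' (p a) = rs s (p a)" using rs_comp[OF sX(1) j(1) pa(1) j(2) js] unfolding s'_def by simp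
  hence as': "bsle a s'" unfolding bsle_iff using bsle_rs[OF sX(2)] s' j by simp
  have "rs s' (p b) = rs s (p b)" using rs_comp[OF sX(1) j(1) pa(2) j(3) js] unfolding s'_def by simp
  hence bs': "bsle b s'" unfolding bsle_iff using bsle_rs[OF sX(3)] s' j by simp
  have "bsle s s'" using s s' as' bs' unfolding is_sup_def by blast
  hence "le (p s) j" using bsle_p s' by metis
  hence psj: "p s = j" using antisym js ps j by blast
  have "L s = L a \<union> L b"
  proof
    show "L a \<union> L b \<subseteq> L s" using L_mono[OF sX(1) sX(2)] L_mono[OF sX(1) sX(3)] by blast
    show "L s \<subseteq> L a \<union> L b"
    proof
      fix G assume G: "G \<in> L s"
      have F: "p ` G \<in> M (p s)" using L_elem(4)[OF G] .
      hence "p ` G \<in> M (p a) \<union> M (p b)" using psj M_join pa unfolding j_def by simp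
      moreover have "G \<in> L a" if hh: "p ` G \<in> M (p a)"
      proof -
        have pin: "p a \<in> p ` G" using hh unfolding M_def2 by blast
        have "a \<in> germs {s} (p ` G)"
          using germs_I[OF a, of s "{s}" "p a" "p ` G"] pin sX(2) bsle_p[OF sX(2)] bsle_rs[OF sX(2)] refl[OF pa(1)] rs_id[OF a]
          by simp
        hence "a \<in> G" using L_elem(3)[OF G] by simp
        thus ?thesis using L_sub a L_elem(1)[OF G] by blast
      qed
      moreover have "G \<in> L b" if hh: "p ` G \<in> M (p b)"
      proof -
        have pin: "p b \<in> p ` G" using hh unfolding M_def2 by blast
        have "b \<in> germs {s} (p ` G)"
          using germs_I[OF b, of s "{s}" "p b" "p ` G"] pin sX(3) bsle_p[OF sX(3)] bsle_rs[OF sX(3)] refl[OF pa(2)] rs_id[OF b]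
          by simp
        hence "b \<in> G" using L_elem(3)[OF G] by simp
        thus ?thesis using L_sub b L_elem(1)[OF G] by blast
      qed
      ultimately show "G \<in> L a \<union> L b" by blast
    qed
  qed
  thus ?thesis using sX by blast
qed

lemma glue_fin: assumes C: "inj_on r C"
  shows "finite T \<Longrightarrow> T \<subseteq> {a\<in>X. L a \<subseteq> C} \<Longrightarrow> \<exists>a\<in>X. L a \<subseteq> C \<and> \<Union>(L ` T) \<subseteq> L a"
proof (induction T rule: finite_induct)
  case empty thus ?case using z0_in L_z0 by (intro bexI[of _ z0]) auto
next
  case (insert b T)
  then obtain a where a: "a \<in> X" "L a \<subseteq> C" "\<Union>(L ` T) \<subseteq> L a" by blast
  have b: "b \<in> X" "L b \<subseteq> C" using insert by auto
  obtain s where s: "s \<in> X" "L s = L a \<union> L b" using glue2[OF a(1) b(1) a(2) b(2) C] by blast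
  have "L s \<subseteq> C" using s a b by blast
  moreover have "\<Union>(L ` insert b T) \<subseteq> L s" using s a by auto
  ultimately show ?case using s by blast
qed

lemma sections_eq: "etale_sections TX r = L ` X"
proof
  show "L ` X \<subseteq> etale_sections TX r"
    unfolding etale_sections_def using L_open L_compact inj_L by blast
  show "etale_sections TX r \<subseteq> L ` X"
  proof
    fix C assume "C \<in> etale_sections TX r"
    hence C: "openin TX C" "compactin TX C" "inj_on r C" unfolding etale_sections_def by auto
    define S' where "S' = {s \<in> L ` X. s \<subseteq> C}"
    have "openin (topology_generated_by (L ` X)) C" using C(1) TX_def2 by simp
    hence "\<forall>x\<in>C. \<exists>s\<in>L ` X. x \<in> s \<and> s \<subseteq> C" by (rule gen_local[OF L_loc])
    hence cov: "C \<subseteq> \<Union>S'" unfolding S'_def by blast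
    have opS: "\<forall>s\<in>S'. openin TX s" unfolding S'_def using L_open by blast
    have cp: "\<And>\<U>. (\<forall>U\<in>\<U>. openin TX U) \<Longrightarrow> C \<subseteq> \<Union>\<U> \<Longrightarrow> \<exists>\<F>. finite \<F> \<and> \<F> \<subseteq> \<U> \<and> C \<subseteq> \<Union>\<F>"
      using C(2) unfolding compactin_def by blast
    obtain \<F> where F: "finite \<F>" "\<F> \<subseteq> S'" "C \<subseteq> \<Union>\<F>" using cp[OF opS cov] by blast
    define A where "A = {a\<in>X. L a \<subseteq> C}"
    have "\<F> \<subseteq> L ` A" using F(2) unfolding S'_def A_def by blast
    hence "\<exists>T\<subseteq>A. finite T \<and> \<F> = L ` T" by (rule finite_subset_image[OF F(1)])
    then obtain T where T0: "T \<subseteq> A" "finite T" "\<F> = L ` T" by blast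
    hence T: "T \<subseteq> {a\<in>X. L a \<subseteq> C}" "finite T" "\<F> = L ` T" unfolding A_def by auto
    obtain a where a: "a \<in> X" "L a \<subseteq> C" "\<Union>(L ` T) \<subseteq> L a" using glue_fin[OF C(3) T(2) T(1)] by blast
    have "C = L a" using a F T by blast
    thus "C \<in> L ` X" using a by blast
  qed
qed

lemma proj_L: "a \<in> X \<Longrightarrow> etale_proj r (L a) = M (p a)"
  unfolding etale_proj_def using r_L by simp

lemma res_L: assumes a: "a \<in> X" and f: "f \<in> B" "le f (p a)"
  shows "etale_res TX r (M (p a)) (M f) (L a) = L (rs a f)"
proof -
  have "etale_res TX r (M (p a)) (M f) (L a) = {G \<in> L a. f \<in> p ` G}"
  proof -
    have "G \<in> topspace TX" if "G \<in> L a" for G using that L_elem(1) topspace_TX by blast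
    moreover have "p ` G \<in> M f \<longleftrightarrow> f \<in> p ` G" if "G \<in> L a" for G
      using that L_elem(1) xuf_img unfolding M_def2 by blast
    ultimately show ?thesis unfolding etale_res_def by blast
  qed
  thus ?thesis using L_res[OF a f] by simp
qed

end


locale otr =
  fixes f :: "'a \<Rightarrow> 'c" and A :: "'a set" and A' :: "'c set" and R :: "'a \<Rightarrow> 'a \<Rightarrow> bool" and R' :: "'c \<Rightarrow> 'c \<Rightarrow> bool"
  assumes bij: "bij_betw f A A'"
    and ordr: "\<And>a b. a \<in> A \<Longrightarrow> b \<in> A \<Longrightarrow> R' (f a) (f b) \<longleftrightarrow> R a b"
begin

lemma f_in: "a \<in> A \<Longrightarrow> f a \<in> A'" using bij bij_betwE by blast
lemma f_inj: "a \<in> A \<Longrightarrow> b \<in> A \<Longrightarrow> f a = f b \<longleftrightarrow> a = b" using bij unfolding bij_betw_def inj_on_def by blast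
lemma A'_cases: "y \<in> A' \<Longrightarrow> \<exists>x\<in>A. y = f x" using bij unfolding bij_betw_def by blast
lemma ball_tr: "(\<forall>y\<in>A'. P y) \<longleftrightarrow> (\<forall>x\<in>A. P (f x))" using A'_cases f_in by metis
lemma bex_tr: "(\<exists>y\<in>A'. P y) \<longleftrightarrow> (\<exists>x\<in>A. P (f x))" using A'_cases f_in by metis
lemma mem_tr: "a \<in> A \<Longrightarrow> f a \<in> A'" by (rule f_in)

lemma least_tr: "a \<in> A \<Longrightarrow> is_least A' R' (f a) \<longleftrightarrow> is_least A R a"
  unfolding is_least_def ball_tr[of "\<lambda>y. R' (f a) y"] using ordr f_in by auto

lemma least_in: "is_least A' R' z \<Longrightarrow> z \<in> A'" unfolding is_least_def by blast
lemma inf_in: "is_inf A' R' x y m \<Longrightarrow> m \<in> A'" unfolding is_inf_def by blast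
lemma sup_in: "is_sup A' R' x y m \<Longrightarrow> m \<in> A'" unfolding is_sup_def by blast
lemma inf_in0: "is_inf A R x y m \<Longrightarrow> m \<in> A" unfolding is_inf_def by blast
lemma sup_in0: "is_sup A R x y m \<Longrightarrow> m \<in> A" unfolding is_sup_def by blast
lemma least_in0: "is_least A R z \<Longrightarrow> z \<in> A" unfolding is_least_def by blast

lemma inf_tr: "a \<in> A \<Longrightarrow> b \<in> A \<Longrightarrow> m \<in> A \<Longrightarrow> is_inf A' R' (f a) (f b) (f m) \<longleftrightarrow> is_inf A R a b m"
  unfolding is_inf_def ball_tr[of "\<lambda>c. R' c (f a) \<and> R' c (f b) \<longrightarrow> R' c (f m)"] using ordr f_in by auto

lemma sup_tr: "a \<in> A \<Longrightarrow> b \<in> A \<Longrightarrow> m \<in> A \<Longrightarrow> is_sup A' R' (f a) (f b) (f m) \<longleftrightarrow> is_sup A R a b m"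
  unfolding is_sup_def ball_tr[of "\<lambda>c. R' (f a) c \<and> R' (f b) c \<longrightarrow> R' (f m) c"] using ordr f_in by auto

lemma po_tr: assumes po: "partial_order_carrier A R" shows "partial_order_carrier A' R'"
proof -
  have 1: "\<forall>x\<in>A. R x x" and 2: "\<forall>x\<in>A. \<forall>y\<in>A. R x y \<and> R y x \<longrightarrow> x = y"
    and 3: "\<forall>x\<in>A. \<forall>y\<in>A. \<forall>z\<in>A. R x y \<and> R y z \<longrightarrow> R x z"
    using po unfolding partial_order_carrier_def by blast+
  have "\<forall>x\<in>A. R' (f x) (f x)" using 1 ordr by simp
  moreover have "\<forall>x\<in>A. \<forall>y\<in>A. R' (f x) (f y) \<and> R' (f y) (f x) \<longrightarrow> f x = f y"
  proof (intro ballI impI)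
    fix x y assume xy: "x \<in> A" "y \<in> A" "R' (f x) (f y) \<and> R' (f y) (f x)"
    hence "R x y" "R y x" using ordr by auto
    hence "x = y" using 2 xy(1,2) by blast
    thus "f x = f y" by simp
  qed
  moreover have "\<forall>x\<in>A. \<forall>y\<in>A. \<forall>z\<in>A. R' (f x) (f y) \<and> R' (f y) (f z) \<longrightarrow> R' (f x) (f z)"
  proof (intro ballI impI)
    fix x y z assume xy: "x \<in> A" "y \<in> A" "z \<in> A" "R' (f x) (f y) \<and> R' (f y) (f z)"
    hence "R x y" "R y z" using ordr by auto
    hence "R x z" using 3 xy(1,2,3) by blast
    thus "R' (f x) (f z)" using ordr xy by auto
  qed
  ultimately show ?thesis unfolding partial_order_carrier_def ball_tr by blast
qed

lemma ex_least_tr: "(\<exists>z. is_least A R z) \<Longrightarrow> (\<exists>z. is_least A' R' z)"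
  using least_tr least_in0 by blast

lemma ex_inf_tr: "a \<in> A \<Longrightarrow> b \<in> A \<Longrightarrow> (\<exists>m. is_inf A R a b m) \<Longrightarrow> (\<exists>m. is_inf A' R' (f a) (f b) m)"
  using inf_tr inf_in0 by blast
lemma ex_sup_tr: "a \<in> A \<Longrightarrow> b \<in> A \<Longrightarrow> (\<exists>m. is_sup A R a b m) \<Longrightarrow> (\<exists>m. is_sup A' R' (f a) (f b) m)"
  using sup_tr sup_in0 by blast

lemma gba_tr: assumes g: "gen_boolean_algebra A R" shows "gen_boolean_algebra A' R'"
proof -
  have g1: "partial_order_carrier A R" using g unfolding gen_boolean_algebra_def by (elim conjE)
  have g2: "\<exists>z. is_least A R z" using g unfolding gen_boolean_algebra_def by (elim conjE)
  have g3: "\<forall>a\<in>A. \<forall>b\<in>A. (\<exists>m. is_inf A R a b m) \<and> (\<exists>s. is_sup A R a b s)"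
    using g unfolding gen_boolean_algebra_def by (elim conjE)
  have g4: "\<forall>a\<in>A. \<forall>b\<in>A. \<forall>c\<in>A. \<forall>s m mb mc.
        is_sup A R b c s \<and> is_inf A R a s m \<and> is_inf A R a b mb \<and> is_inf A R a c mc
        \<longrightarrow> is_sup A R mb mc m" using g unfolding gen_boolean_algebra_def by (elim conjE)
  have g5: "\<forall>a\<in>A. \<forall>b\<in>A. \<forall>z. R a b \<and> is_least A R z \<longrightarrow>
        (\<exists>c\<in>A. is_inf A R a c z \<and> is_sup A R a c b)" using g unfolding gen_boolean_algebra_def by (elim conjE)
  have h3: "\<forall>a\<in>A'. \<forall>b\<in>A'. (\<exists>m. is_inf A' R' a b m) \<and> (\<exists>s. is_sup A' R' a b s)"
    unfolding ball_tr using g3 ex_inf_tr ex_sup_tr by blast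
  have h4: "\<forall>a\<in>A'. \<forall>b\<in>A'. \<forall>c\<in>A'. \<forall>s m mb mc.
        is_sup A' R' b c s \<and> is_inf A' R' a s m \<and> is_inf A' R' a b mb \<and> is_inf A' R' a c mc
        \<longrightarrow> is_sup A' R' mb mc m"
    unfolding ball_tr
  proof (intro ballI allI impI)
    fix a b c s m mb mc assume abc: "a \<in> A" "b \<in> A" "c \<in> A"
      and H: "is_sup A' R' (f b) (f c) s \<and> is_inf A' R' (f a) s m \<and> is_inf A' R' (f a) (f b) mb \<and> is_inf A' R' (f a) (f c) mc"
    obtain s0 where s0: "s0 \<in> A" "s = f s0" using A'_cases sup_in H by blast
    obtain m0 where m0: "m0 \<in> A" "m = f m0" using A'_cases inf_in H by blast
    obtain mb0 where mb0: "mb0 \<in> A" "mb = f mb0" using A'_cases inf_in H by blast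
    obtain mc0 where mc0: "mc0 \<in> A" "mc = f mc0" using A'_cases inf_in H by blast
    have "is_sup A R b c s0" "is_inf A R a s0 m0" "is_inf A R a b mb0" "is_inf A R a c mc0"
      using H s0 m0 mb0 mc0 abc sup_tr inf_tr by auto
    hence "is_sup A R mb0 mc0 m0" using g4 abc by blast
    thus "is_sup A' R' mb mc m" using sup_tr mb0 mc0 m0 by simp
  qed
  have h5: "\<forall>a\<in>A'. \<forall>b\<in>A'. \<forall>z. R' a b \<and> is_least A' R' z \<longrightarrow>
        (\<exists>c\<in>A'. is_inf A' R' a c z \<and> is_sup A' R' a c b)"
    unfolding ball_tr
  proof (intro ballI allI impI)
    fix a b z assume ab: "a \<in> A" "b \<in> A" and H: "R' (f a) (f b) \<and> is_least A' R' z"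
    obtain z0 where z0: "z0 \<in> A" "z = f z0" using A'_cases least_in H by blast
    have "R a b" "is_least A R z0" using H ab z0 ordr least_tr by auto
    then obtain c where c: "c \<in> A" "is_inf A R a c z0" "is_sup A R a c b" using g5 ab by blast
    have "is_inf A' R' (f a) (f c) z" "is_sup A' R' (f a) (f c) (f b)" using c ab z0 inf_tr sup_tr by auto
    thus "\<exists>c\<in>A'. is_inf A' R' (f a) c z \<and> is_sup A' R' (f a) c (f b)" using c f_in by blast
  qed
  show ?thesis unfolding gen_boolean_algebra_def using po_tr[OF g1] ex_least_tr[OF g2] h3 h4 h5 by blast
qed

lemma ba_hom_tr: "ba_hom A R A' R' f"
  unfolding ba_hom_def
proof (intro conjI allI impI ballI)
  show "f ` A \<subseteq> A'" using f_in by blast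
  fix z assume "is_least A R z" thus "is_least A' R' (f z)" using least_tr least_in0 by blast
next
  fix a b m assume "a \<in> A" "b \<in> A" "is_inf A R a b m" thus "is_inf A' R' (f a) (f b) (f m)" using inf_tr inf_in0 by blast
next
  fix a b m assume "a \<in> A" "b \<in> A" "is_sup A R a b m" thus "is_sup A' R' (f a) (f b) (f m)" using sup_tr sup_in0 by blast
qed

end


locale trans =
  fixes X :: "'x set" and B :: "'b set" and le :: "'b \<Rightarrow> 'b \<Rightarrow> bool"
    and p :: "'x \<Rightarrow> 'b" and res :: "'b \<Rightarrow> 'b \<Rightarrow> 'x \<Rightarrow> 'x"
    and Y :: "'y set" and C :: "'c set" and le' :: "'c \<Rightarrow> 'c \<Rightarrow> bool"
    and q :: "'y \<Rightarrow> 'c" and res' :: "'c \<Rightarrow> 'c \<Rightarrow> 'y \<Rightarrow> 'y"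
    and \<phi> :: "'x \<Rightarrow> 'y" and \<phi>b :: "'b \<Rightarrow> 'c"
  assumes bX: "bij_betw \<phi> X Y" and bB: "bij_betw \<phi>b B C"
    and ord: "\<And>a b. a \<in> B \<Longrightarrow> b \<in> B \<Longrightarrow> le' (\<phi>b a) (\<phi>b b) \<longleftrightarrow> le a b"
    and pin: "\<And>x. x \<in> X \<Longrightarrow> p x \<in> B"
    and proj: "\<And>x. x \<in> X \<Longrightarrow> q (\<phi> x) = \<phi>b (p x)"
    and resc: "\<And>x f. x \<in> X \<Longrightarrow> f \<in> B \<Longrightarrow> le f (p x) \<Longrightarrow> res' (\<phi>b (p x)) (\<phi>b f) (\<phi> x) = \<phi> (res (p x) f x)"
    and rsin: "\<And>x f. x \<in> X \<Longrightarrow> f \<in> B \<Longrightarrow> le f (p x) \<Longrightarrow> res (p x) f x \<in> X"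
begin

sublocale ob: otr \<phi>b B C le le' by (unfold_locales) (rule bB, rule ord)

lemma phi_in: "x \<in> X \<Longrightarrow> \<phi> x \<in> Y" using bX bij_betwE by blast
lemma phi_inj: "x \<in> X \<Longrightarrow> y \<in> X \<Longrightarrow> \<phi> x = \<phi> y \<longleftrightarrow> x = y" using bX unfolding bij_betw_def inj_on_def by blast
lemma Y_cases: "y \<in> Y \<Longrightarrow> \<exists>x\<in>X. y = \<phi> x" using bX unfolding bij_betw_def by blast

lemma bsle_tr: assumes x: "x \<in> X" and y: "y \<in> X"
  shows "bs_le C le' q res' (\<phi> x) (\<phi> y) \<longleftrightarrow> bs_le B le p res x y"
proof (cases "le (p x) (p y)")
  case True
  have "res' (q (\<phi> y)) (q (\<phi> x)) (\<phi> y) = \<phi> (res (p y) (p x) y)"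
    using proj x y resc[OF y pin[OF x] True] by simp
  moreover have "le' (q (\<phi> x)) (q (\<phi> y))" using True proj x y ord pin by simp
  moreover have "res (p y) (p x) y \<in> X \<Longrightarrow> (\<phi> x = \<phi> (res (p y) (p x) y) \<longleftrightarrow> x = res (p y) (p x) y)"
    using phi_inj x by blast
  moreover have "res (p y) (p x) y \<in> X" using rsin[OF y pin[OF x] True] .
  ultimately show ?thesis unfolding bs_le_def using True by simp
next
  case False
  have "\<not> le' (q (\<phi> x)) (q (\<phi> y))" using False proj x y ord pin by simp
  thus ?thesis unfolding bs_le_def using False by simp
qed

sublocale ox: otr \<phi> X Y "bs_le B le p res" "bs_le C le' q res'"
  by (unfold_locales) (rule bX, rule bsle_tr)

lemma morph: "bs_morphism X B le p res Y C le' q res' \<phi> \<phi>b"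
  unfolding bs_morphism_def
proof (intro conjI ballI impI)
  show "\<phi> ` X \<subseteq> Y" using phi_in by blast
  show "ba_hom B le C le' \<phi>b" by (rule ob.ba_hom_tr)
  show "q (\<phi> x) = \<phi>b (p x)" if "x \<in> X" for x using proj that by blast
  show "\<phi> (res (p x) f x) = res' (\<phi>b (p x)) (\<phi>b f) (\<phi> x)" if "x \<in> X" "f \<in> B" "le f (p x)" for x f
    using resc[OF that] by simp
qed

lemma bs_tr: assumes bs: "boolean_set X B le p res" shows "boolean_set Y C le' q res'"
proof -
  have b1: "gen_boolean_algebra B le" using bs unfolding boolean_set_def by (elim conjE)
  have b3: "\<forall>e\<in>B. \<exists>x\<in>X. p x = e" using bs unfolding boolean_set_def by (elim conjE)
  have b4: "\<forall>x\<in>X. \<forall>f\<in>B. le f (p x) \<longrightarrow> res (p x) f x \<in> X \<and> p (res (p x) f x) = f"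
    using bs unfolding boolean_set_def by (elim conjE)
  have b5: "\<forall>x\<in>X. res (p x) (p x) x = x" using bs unfolding boolean_set_def by (elim conjE)
  have b6: "\<forall>x\<in>X. \<forall>f\<in>B. \<forall>g\<in>B. le g f \<and> le f (p x) \<longrightarrow> res f g (res (p x) f x) = res (p x) g x"
    using bs unfolding boolean_set_def by (elim conjE)
  have b7: "\<exists>z. is_least X (bs_le B le p res) z \<and> (\<forall>x\<in>X. is_least B le (p x) \<longrightarrow> x = z)"
    using bs unfolding boolean_set_def by (elim conjE)
  have b8: "\<forall>x\<in>X. \<forall>y\<in>X. (\<exists>m. is_inf X (bs_le B le p res) x y m \<and> is_inf B le (p x) (p y) (p m))
        \<longrightarrow> (\<exists>s. is_sup X (bs_le B le p res) x y s)"
    using bs unfolding boolean_set_def by (elim conjE)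
  have po: "partial_order_carrier B le" using b1 unfolding gen_boolean_algebra_def by (elim conjE)
  have reflB: "\<And>a. a \<in> B \<Longrightarrow> le a a" using po unfolding partial_order_carrier_def by blast
  have transB: "\<And>a b c. a \<in> B \<Longrightarrow> b \<in> B \<Longrightarrow> c \<in> B \<Longrightarrow> le a b \<Longrightarrow> le b c \<Longrightarrow> le a c"
    using po unfolding partial_order_carrier_def by blast
  have c1: "gen_boolean_algebra C le'" using ob.gba_tr[OF b1] .
  have c2: "\<forall>y\<in>Y. q y \<in> C" unfolding ox.ball_tr using proj pin ob.f_in by simp
  have c3: "\<forall>e\<in>C. \<exists>y\<in>Y. q y = e" unfolding ob.ball_tr ox.bex_tr using b3 proj by metis
  have c4: "\<forall>y\<in>Y. \<forall>f\<in>C. le' f (q y) \<longrightarrow> res' (q y) f y \<in> Y \<and> q (res' (q y) f y) = f"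
    unfolding ox.ball_tr ob.ball_tr
  proof (intro ballI impI)
    fix x f assume xf: "x \<in> X" "f \<in> B" "le' (\<phi>b f) (q (\<phi> x))"
    hence le: "le f (p x)" using proj ord pin by simp
    have "res' (q (\<phi> x)) (\<phi>b f) (\<phi> x) = \<phi> (res (p x) f x)" using resc[OF xf(1,2) le] proj xf by simp
    thus "res' (q (\<phi> x)) (\<phi>b f) (\<phi> x) \<in> Y \<and> q (res' (q (\<phi> x)) (\<phi>b f) (\<phi> x)) = \<phi>b f"
      using b4 xf le phi_in proj by simp
  qed
  have c5: "\<forall>y\<in>Y. res' (q y) (q y) y = y" unfolding ox.ball_tr
    using resc pin reflB b5 proj by simp
  have c6: "\<forall>y\<in>Y. \<forall>f\<in>C. \<forall>g\<in>C. le' g f \<and> le' f (q y) \<longrightarrow> res' f g (res' (q y) f y) = res' (q y) g y"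
    unfolding ox.ball_tr ob.ball_tr
  proof (intro ballI impI)
    fix x f g assume xfg: "x \<in> X" "f \<in> B" "g \<in> B" "le' (\<phi>b g) (\<phi>b f) \<and> le' (\<phi>b f) (q (\<phi> x))"
    hence le: "le g f" "le f (p x)" using proj ord pin by auto
    define x1 where "x1 = res (p x) f x"
    have x1: "x1 \<in> X" "p x1 = f" using b4 xfg le unfolding x1_def by auto
    have lex: "le g (p x)" using transB[of g f "p x"] le xfg pin by blast
    have "res' (q (\<phi> x)) (\<phi>b f) (\<phi> x) = \<phi> x1" using resc[OF xfg(1,2) le(2)] proj xfg unfolding x1_def by simp
    hence "res' (\<phi>b f) (\<phi>b g) (res' (q (\<phi> x)) (\<phi>b f) (\<phi> x)) = \<phi> (res (p x1) g x1)"
      using resc[OF x1(1) xfg(3)] x1 le by simp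
    also have "\<dots> = \<phi> (res (p x) g x)" using b6 xfg le x1 unfolding x1_def by simp
    also have "\<dots> = res' (q (\<phi> x)) (\<phi>b g) (\<phi> x)" using resc[OF xfg(1,3) lex] proj xfg by simp
    finally show "res' (\<phi>b f) (\<phi>b g) (res' (q (\<phi> x)) (\<phi>b f) (\<phi> x)) = res' (q (\<phi> x)) (\<phi>b g) (\<phi> x)" .
  qed
  have c7: "\<exists>z. is_least Y (bs_le C le' q res') z \<and> (\<forall>y\<in>Y. is_least C le' (q y) \<longrightarrow> y = z)"
  proof -
    obtain z where z: "is_least X (bs_le B le p res) z" "\<forall>x\<in>X. is_least B le (p x) \<longrightarrow> x = z" using b7 by blast
    have zX: "z \<in> X" using z ox.least_in0 by blast
    have "is_least Y (bs_le C le' q res') (\<phi> z)" using ox.least_tr zX z by blast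
    moreover have "\<forall>y\<in>Y. is_least C le' (q y) \<longrightarrow> y = \<phi> z" unfolding ox.ball_tr
    proof (intro ballI impI)
      fix x assume "x \<in> X" "is_least C le' (q (\<phi> x))"
      hence "is_least B le (p x)" using proj ob.least_tr pin by simp
      thus "\<phi> x = \<phi> z" using z \<open>x \<in> X\<close> by simp
    qed
    ultimately show ?thesis by blast
  qed
  have c8: "\<forall>y1\<in>Y. \<forall>y2\<in>Y. (\<exists>m. is_inf Y (bs_le C le' q res') y1 y2 m \<and> is_inf C le' (q y1) (q y2) (q m))
        \<longrightarrow> (\<exists>s. is_sup Y (bs_le C le' q res') y1 y2 s)"
    unfolding ox.ball_tr
  proof (intro ballI impI)
    fix x1 x2 assume x: "x1 \<in> X" "x2 \<in> X"
      and H: "\<exists>m. is_inf Y (bs_le C le' q res') (\<phi> x1) (\<phi> x2) m \<and> is_inf C le' (q (\<phi> x1)) (q (\<phi> x2)) (q m)"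
    then obtain m' where m': "is_inf Y (bs_le C le' q res') (\<phi> x1) (\<phi> x2) m'" "is_inf C le' (q (\<phi> x1)) (q (\<phi> x2)) (q m')" by blast
    obtain m where m: "m \<in> X" "m' = \<phi> m" using Y_cases ox.inf_in m'(1) by blast
    have "is_inf X (bs_le B le p res) x1 x2 m" using ox.inf_tr x m m' by simp
    moreover have "is_inf B le (p x1) (p x2) (p m)" using ob.inf_tr x m m' proj pin by simp
    ultimately obtain s where s: "is_sup X (bs_le B le p res) x1 x2 s" using b8 x by blast
    have "s \<in> X" using s ox.sup_in0 by blast
    hence "is_sup Y (bs_le C le' q res') (\<phi> x1) (\<phi> x2) (\<phi> s)" using ox.sup_tr x s by blast
    thus "\<exists>s. is_sup Y (bs_le C le' q res') (\<phi> x1) (\<phi> x2) s" by blast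
  qed
  show ?thesis unfolding boolean_set_def using c1 c2 c3 c4 c5 c6 c7 c8 by blast
qed

lemma inv_trans: assumes bs: "boolean_set X B le p res"
  shows "trans Y C le' q res' X B le p res (inv_into X \<phi>) (inv_into B \<phi>b)"
proof -
  have b4: "\<forall>x\<in>X. \<forall>f\<in>B. le f (p x) \<longrightarrow> res (p x) f x \<in> X \<and> p (res (p x) f x) = f"
    using bs unfolding boolean_set_def by (elim conjE)
  have iX: "\<And>x. x \<in> X \<Longrightarrow> inv_into X \<phi> (\<phi> x) = x" using bX bij_betw_inv_into_left by metis
  have iB: "\<And>b. b \<in> B \<Longrightarrow> inv_into B \<phi>b (\<phi>b b) = b" using bB bij_betw_inv_into_left by metis
  show ?thesis
  proof (unfold_locales)
    show "bij_betw (inv_into X \<phi>) Y X" using bij_betw_inv_into bX by blast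
    show "bij_betw (inv_into B \<phi>b) C B" using bij_betw_inv_into bB by blast
    show "le (inv_into B \<phi>b a) (inv_into B \<phi>b b) \<longleftrightarrow> le' a b" if "a \<in> C" "b \<in> C" for a b
      using that ob.A'_cases iB ord by metis
    show "q y \<in> C" if "y \<in> Y" for y using that Y_cases proj pin ob.f_in by metis
    show "p (inv_into X \<phi> y) = inv_into B \<phi>b (q y)" if "y \<in> Y" for y
      using that Y_cases proj pin iX iB by metis
    show "res (inv_into B \<phi>b (q y)) (inv_into B \<phi>b f) (inv_into X \<phi> y) = inv_into X \<phi> (res' (q y) f y)"
      if hh: "y \<in> Y" "f \<in> C" "le' f (q y)" for y f
    proof -
      obtain x where x: "x \<in> X" "y = \<phi> x" using Y_cases hh by blast
      obtain f0 where f0: "f0 \<in> B" "f = \<phi>b f0" using ob.A'_cases hh by blast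
      have le: "le f0 (p x)" using hh x f0 proj ord pin by simp
      have "res' (q y) f y = \<phi> (res (p x) f0 x)" using resc[OF x(1) f0(1) le] x f0 proj by simp
      moreover have "res (p x) f0 x \<in> X" using b4 x f0 le by blast
      ultimately have "inv_into X \<phi> (res' (q y) f y) = res (p x) f0 x" using iX by simp
      moreover have "inv_into B \<phi>b (q y) = p x" using x proj iB pin by simp
      moreover have "inv_into B \<phi>b f = f0" using f0 iB by simp
      moreover have "inv_into X \<phi> y = x" using x iX by simp
      ultimately show ?thesis by simp
    qed
    show "res' (q y) f y \<in> Y" if hh: "y \<in> Y" "f \<in> C" "le' f (q y)" for y f
    proof -
      obtain x where x: "x \<in> X" "y = \<phi> x" using Y_cases hh by blast
      obtain f0 where f0: "f0 \<in> B" "f = \<phi>b f0" using ob.A'_cases hh by blast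
      have le: "le f0 (p x)" using hh x f0 proj ord pin by simp
      have "res' (q y) f y = \<phi> (res (p x) f0 x)" using resc[OF x(1) f0(1) le] x f0 proj by simp
      thus ?thesis using phi_in rsin[OF x(1) f0(1) le] by simp
    qed
  qed
qed

lemma iso: assumes bs: "boolean_set X B le p res"
  shows "boolean_set Y C le' q res' \<and> bs_iso X B le p res Y C le' q res' \<phi> \<phi>b"
proof -
  interpret inv: trans Y C le' q res' X B le p res "inv_into X \<phi>" "inv_into B \<phi>b" by (rule inv_trans[OF bs])
  have iX: "\<And>x. x \<in> X \<Longrightarrow> inv_into X \<phi> (\<phi> x) = x" using bX bij_betw_inv_into_left by metis
  have iB: "\<And>b. b \<in> B \<Longrightarrow> inv_into B \<phi>b (\<phi>b b) = b" using bB bij_betw_inv_into_left by metis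
  have iY: "\<And>y. y \<in> Y \<Longrightarrow> \<phi> (inv_into X \<phi> y) = y" using bX bij_betw_inv_into_right by metis
  have iC: "\<And>c. c \<in> C \<Longrightarrow> \<phi>b (inv_into B \<phi>b c) = c" using bB bij_betw_inv_into_right by metis
  have "bs_iso X B le p res Y C le' q res' \<phi> \<phi>b"
    unfolding bs_iso_def using morph inv.morph iX iB iY iC by blast
  thus ?thesis using bs_tr[OF bs] by blast
qed

end

theorem proposition3p13:
  fixes X :: "'x set" and B :: "'b set" and le :: "'b \<Rightarrow> 'b \<Rightarrow> bool"
    and p :: "'x \<Rightarrow> 'b" and res :: "'b \<Rightarrow> 'b \<Rightarrow> 'x \<Rightarrow> 'x"
  assumes "boolean_set X B le p res"
  shows "boolean_set
           (etale_sections (dual_X_top X B le p res) (\<lambda>G. p ` G))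
           (compact_opens (dual_B_top B le)) (\<subseteq>)
           (etale_proj (\<lambda>G. p ` G)) (etale_res (dual_X_top X B le p res) (\<lambda>G. p ` G))
       \<and> bs_iso X B le p res
           (etale_sections (dual_X_top X B le p res) (\<lambda>G. p ` G))
           (compact_opens (dual_B_top B le)) (\<subseteq>)
           (etale_proj (\<lambda>G. p ` G)) (etale_res (dual_X_top X B le p res) (\<lambda>G. p ` G))
           (L_set X B le p res) (M_set B le)"
proof -
  interpret bset X B le p res by (unfold_locales) (rule assms)
  interpret tr: trans X B le p res
     "etale_sections (dual_X_top X B le p res) (\<lambda>G. p ` G)"
     "compact_opens (dual_B_top B le)" "(\<subseteq>)"
     "etale_proj (\<lambda>G. p ` G)" "etale_res (dual_X_top X B le p res) (\<lambda>G. p ` G)"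
     "L_set X B le p res" "M_set B le"
  proof (unfold_locales)
    show "bij_betw L X (etale_sections TX r)"
      unfolding sections_eq bij_betw_def inj_on_def using L_inj by blast
    show "bij_betw M B (compact_opens TB)"
      unfolding compact_opens_eq bij_betw_def inj_on_def using M_inj by blast
    show "M a \<subseteq> M b \<longleftrightarrow> le a b" if "a \<in> B" "b \<in> B" for a b using M_le_iff that by blast
    show "p x \<in> B" if "x \<in> X" for x using p_in that by blast
    show "etale_proj r (L x) = M (p x)" if "x \<in> X" for x using proj_L that by blast
    show "etale_res TX r (M (p x)) (M f) (L x) = L (rs x f)" if "x \<in> X" "f \<in> B" "le f (p x)" for x f
      using res_L that by blast
    show "rs x f \<in> X" if "x \<in> X" "f \<in> B" "le f (p x)" for x f using rs_in that by blast
  qed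
  show ?thesis by (rule tr.iso[OF assms])
qed

end
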